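(* Let $1 \leq p < \infty$, and for each real $\mu > 1$ let $B_{\mathbf{w}_\mu} : \ell_p \to \ell_p$ be the unilateral weighted backward shift with weight sequence $\mathbf{w}_\mu = (1 + \frac{\mu}{n})_{n \geq 1}$, i.e. $B_{\mathbf{w}_\mu}(x_1,x_2,\dots) = \big((1+\mu)x_2, (1+\tfrac{\mu}{2})x_3, (1+\tfrac{\mu}{3})x_4,\dots\big)$. Then there exists a closed infinite-dimensional subspace $M$ of $\ell_p$ such that every nonzero vector of $M$ is $\mathscr{U}$-frequently hypercyclic for $B_{\mathbf{w}_\mu}$ for every $\mu > 1$, and no vector of $M$ is frequently hypercyclic for $B_{\mathbf{w}_\mu}$ for any $\mu > 1$.
   Context: For $A \subset \mathbb{N}_0 = \{0,1,2,\dots\}$, $\underline{\mathrm{d}}(A) = \liminf_{N\to\infty} \frac{|A \cap \{0,\dots,N\}|}{N+1}$ and $\overline{\mathrm{d}}(A) = \limsup_{N\to\infty} \frac{|A \cap \{0,\dots,N\}|}{N+1}$. For a bounded linear operator $T$ on a Banach space $X$ and $x \in X$, $E \subset X$, let $\mathcal{N}_T(x,E) = \{n \in \mathbb{N}_0 : T^n x \in E\}$. A vector $x$ is frequently hypercyclic (resp. $\mathscr{U}$-frequently hypercyclic) for $T$ if $\underline{\mathrm{d}}(\mathcal{N}_T(x,U)) > 0$ (resp. $\overline{\mathrm{d}}(\mathcal{N}_T(x,U)) > 0$) for every non-empty open $U \subset X$. The scalar field is $\mathbb{R}$ or $\mathbb{C}$. *)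

theory Defs
  imports "HOL-Analysis.Analysis" "HOL-Library.Liminf_Limsup"
begin

text \<open>Sequences are indexed from 0: x 0 is the paper's x_1. Scalars range over a
complete normed field (in practice the real or complex numbers).\<close>

definition lp :: "real \<Rightarrow> (nat \<Rightarrow> 'a::real_normed_field) set" where
  "lp p = {x. summable (\<lambda>n. norm (x n) powr p)}"

definition lp_norm :: "real \<Rightarrow> (nat \<Rightarrow> 'a::real_normed_field) \<Rightarrow> real" where
  "lp_norm p x = (\<Sum>n. norm (x n) powr p) powr (1 / p)"

definition lp_open :: "real \<Rightarrow> (nat \<Rightarrow> 'a::real_normed_field) set \<Rightarrow> bool" where
  "lp_open p U \<longleftrightarrow> U \<subseteq> lp p \<and>
     (\<forall>x\<in>U. \<exists>e>0. \<forall>y\<in>lp p. lp_norm p (\<lambda>n. y n - x n) < e \<longrightarrow> y \<in> U)"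

definition lp_closed :: "real \<Rightarrow> (nat \<Rightarrow> 'a::real_normed_field) set \<Rightarrow> bool" where
  "lp_closed p M \<longleftrightarrow> M \<subseteq> lp p \<and> lp_open p (lp p - M)"

definition seq_subspace :: "(nat \<Rightarrow> 'a::real_normed_field) set \<Rightarrow> bool" where
  "seq_subspace M \<longleftrightarrow> (\<lambda>n. 0) \<in> M \<and> (\<forall>x\<in>M. \<forall>y\<in>M. (\<lambda>n. x n + y n) \<in> M) \<and>
     (\<forall>c. \<forall>x\<in>M. (\<lambda>n. c * x n) \<in> M)"

definition seq_lin_indep :: "nat \<Rightarrow> (nat \<Rightarrow> nat \<Rightarrow> 'a::real_normed_field) \<Rightarrow> bool" where
  "seq_lin_indep k v \<longleftrightarrow>
     (\<forall>c::nat \<Rightarrow> 'a. (\<lambda>n. \<Sum>i<k. c i * v i n) = (\<lambda>n. 0) \<longrightarrow> (\<forall>i<k. c i = 0))"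

definition infinite_dim :: "(nat \<Rightarrow> 'a::real_normed_field) set \<Rightarrow> bool" where
  "infinite_dim M \<longleftrightarrow> (\<forall>k. \<exists>v. (\<forall>i<k. v i \<in> M) \<and> seq_lin_indep k v)"

definition lower_density :: "nat set \<Rightarrow> ereal" where
  "lower_density A = liminf (\<lambda>N. ereal (real (card (A \<inter> {0..N})) / real (N + 1)))"

definition upper_density :: "nat set \<Rightarrow> ereal" where
  "upper_density A = limsup (\<lambda>N. ereal (real (card (A \<inter> {0..N})) / real (N + 1)))"

definition visits :: "('b \<Rightarrow> 'b) \<Rightarrow> 'b \<Rightarrow> 'b set \<Rightarrow> nat set" where
  "visits T x E = {n. (T ^^ n) x \<in> E}"

definition freq_hypercyclic_lp ::
  "real \<Rightarrow> ((nat \<Rightarrow> 'a::real_normed_field) \<Rightarrow> (nat \<Rightarrow> 'a)) \<Rightarrow> (nat \<Rightarrow> 'a) \<Rightarrow> bool" where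
  "freq_hypercyclic_lp p T x \<longleftrightarrow> x \<in> lp p \<and>
     (\<forall>U. lp_open p U \<and> U \<noteq> {} \<longrightarrow> lower_density (visits T x U) > 0)"

definition U_freq_hypercyclic_lp ::
  "real \<Rightarrow> ((nat \<Rightarrow> 'a::real_normed_field) \<Rightarrow> (nat \<Rightarrow> 'a)) \<Rightarrow> (nat \<Rightarrow> 'a) \<Rightarrow> bool" where
  "U_freq_hypercyclic_lp p T x \<longleftrightarrow> x \<in> lp p \<and>
     (\<forall>U. lp_open p U \<and> U \<noteq> {} \<longrightarrow> upper_density (visits T x U) > 0)"

text \<open>Unilateral weighted backward shift with weights w_n = 1 + mu/n (n >= 1),
  with 0-based indexing: (B x)_n = w_(n+1) x_(n+1).\<close>
definition bws :: "real \<Rightarrow> (nat \<Rightarrow> 'a::real_normed_field) \<Rightarrow> nat \<Rightarrow> 'a" where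
  "bws \<mu> x n = of_real (1 + \<mu> / real (n + 1)) * x (Suc n)"

end

theory Submission
  imports Defs "HOL-Computational_Algebra.Fundamental_Theorem_Algebra"
begin

definition ev :: "real poly \<Rightarrow> 'b::real_field \<Rightarrow> 'b" where
  "ev p x = poly (map_poly of_real p) x"

lemma ev_pCons[simp]: "ev (pCons c p) x = of_real c + x * ev p x"
  by (simp add: ev_def map_poly_pCons)

lemma ev_0[simp]: "ev 0 x = 0"
  by (simp add: ev_def)

lemma ev_add: "ev (p + q) x = ev p x + ev q x"
proof (induction p q rule: poly_induct2)
  case 0 then show ?case by simp
next
  case (pCons a p b q) then show ?case by (simp add: algebra_simps)
qed

lemma ev_smult: "ev (smult c p) x = of_real c * ev p x"
  by (induction p) (simp_all add: algebra_simps)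

lemma ev_mult: "ev (p * q) x = ev p x * ev q x"
proof (induction p)
  case 0 then show ?case by simp
next
  case (pCons a p)
  have "pCons a p * q = smult a q + pCons 0 (p * q)" by simp
  then show ?case using pCons by (simp add: ev_add ev_smult algebra_simps)
qed

lemma ev_1[simp]: "ev 1 x = 1"
  by (simp add: ev_def)

lemma ev_const[simp]: "ev [:c:] x = of_real c"
  by simp

lemma ev_power: "ev (p ^ n) x = ev p x ^ n"
  by (induction n) (simp_all add: ev_mult)

lemma ev_of_real: "ev p (of_real y :: 'b::real_field) = of_real (poly p y)"
  by (induction p) auto

lemma ev_real: "ev p (y::real) = poly p y"
  by (induction p) auto

lemma real_poly_factor:
  fixes G :: "real poly"
  assumes "degree G \<ge> 1"
  shows "(\<exists>r H. G = [:-r, 1:] * H) \<or> (\<exists>u v H. v \<noteq> 0 \<and> G = [:u^2+v^2, -2*u, 1:] * H)"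
proof -
  let ?Gc = "map_poly complex_of_real G"
  have "degree ?Gc = degree G" by (simp add: degree_map_poly)
  then have "\<not> constant (poly ?Gc)" using assms by (simp add: constant_degree)
  then obtain z where z: "poly ?Gc z = 0" using fundamental_theorem_of_algebra by blast
  then have evz: "ev G z = 0" by (simp add: ev_def)
  show ?thesis
  proof (cases "Im z = 0")
    case True
    then have "z = of_real (Re z)" by (simp add: complex_eq_iff)
    then have "ev G (complex_of_real (Re z)) = 0" using evz by metis
    then have "poly G (Re z) = 0" by (simp add: ev_of_real)
    then have "[:-(Re z), 1:] dvd G" using poly_eq_0_iff_dvd by blast
    then obtain H where "G = [:-(Re z), 1:] * H" by (auto elim!: dvdE)
    then show ?thesis by blast
  next
    case False
    define Q where "Q = [:(Re z)^2+(Im z)^2, -2*Re z, 1:]"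
    have Q0: "Q \<noteq> 0" by (simp add: Q_def)
    have dQ: "degree Q = 2" by (simp add: Q_def)
    have evQ: "ev Q z = 0"
      by (simp add: Q_def complex_eq_iff power2_eq_square algebra_simps)
    define R where "R = G mod Q"
    have GQ: "G = Q * (G div Q) + R" by (simp add: R_def)
    have "ev G z = ev Q z * ev (G div Q) z + ev R z"
      by (subst GQ) (simp add: ev_add ev_mult)
    then have evR: "ev R z = 0" using evz evQ by simp
    have "degree R < 2"
      using degree_mod_less[OF Q0, of G] dQ by (auto simp: R_def)
    then have Rform: "R = [:coeff R 0, coeff R 1:]"
      by (intro poly_eqI) (auto simp: coeff_pCons coeff_eq_0 split: nat.split)
    have "of_real (coeff R 0) + z * of_real (coeff R 1) = 0"
      using evR by (subst (asm) Rform) simp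
    then have "coeff R 1 * Im z = 0" "coeff R 0 + Re z * coeff R 1 = 0"
      by (auto simp: complex_eq_iff)
    then have "coeff R 1 = 0" "coeff R 0 = 0" using False by auto
    then have "R = 0" using Rform by simp
    then have "G = Q * (G div Q)" using GQ by simp
    then show ?thesis using False unfolding Q_def by blast
  qed
qed

lemma ev_lower:
  fixes a :: "'a::real_normed_field"
  assumes m0: "0 \<le> m" and hm: "\<And>x c. c \<ge> 0 \<Longrightarrow> m \<le> norm (ev [:x^2+c, -2*x, 1:] a)"
  shows "lead_coeff G = 1 \<Longrightarrow> sqrt m ^ degree G \<le> norm (ev G a)"
proof (induction "degree G" arbitrary: G rule: less_induct)
  case less
  show ?case
  proof (cases "degree G = 0")
    case True
    then have "G = [:1:]" using less.prems by (metis lead_coeff_pCons(2) degree_eq_zeroE pCons_0_0)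
    then show ?thesis using True by simp
  next
    case False
    then have "degree G \<ge> 1" by simp
    from real_poly_factor[OF this] show ?thesis
    proof
      assume "\<exists>r H. G = [:-r, 1:] * H"
      then obtain r H where GH: "G = [:-r, 1:] * H" by blast
      have H0: "H \<noteq> 0" using GH less.prems by auto
      have "degree ([:-r,1:] * H) = degree [:-r,1:] + degree H" by (rule degree_mult_eq) (use H0 in auto)
      then have dG: "degree G = Suc (degree H)" using GH by simp
      have "lead_coeff ([:-r,1:] * H) = lead_coeff [:-r,1:] * lead_coeff H" by (rule lead_coeff_mult)
      then have lH: "lead_coeff H = 1" using GH less.prems by simp
      have IH: "sqrt m ^ degree H \<le> norm (ev H a)" using less.hyps[of H] dG lH by simp
      have "m \<le> norm (ev [:r^2+0, -2*r, 1:] a)" using hm[of 0 r] by simp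
      also have "ev [:r^2+0, -2*r, 1:] a = (a - of_real r)^2"
        by (simp add: power2_eq_square algebra_simps)
      also have "norm ((a - of_real r)^2) = norm (a - of_real r)^2" by (simp add: norm_power)
      finally have "sqrt m \<le> norm (a - of_real r)" by (metis norm_ge_zero real_sqrt_le_mono real_sqrt_abs abs_of_nonneg)
      moreover have "ev [:-r, 1:] a = a - of_real r" by simp
      ultimately have "sqrt m * sqrt m ^ degree H \<le> norm (ev [:-r, 1:] a) * norm (ev H a)"
        using IH m0 by (intro mult_mono) auto
      moreover have "ev G a = ev [:-r,1:] a * ev H a" by (simp only: GH ev_mult)
      ultimately show ?thesis using dG by (simp add: norm_mult)
    next
      assume "\<exists>u v H. v \<noteq> 0 \<and> G = [:u^2+v^2, -2*u, 1:] * H"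
      then obtain u v H where GH: "G = [:u^2+v^2, -2*u, 1:] * H" by blast
      have H0: "H \<noteq> 0" using GH less.prems by auto
      have "degree ([:u^2+v^2, -2*u, 1:] * H) = degree [:u^2+v^2, -2*u, 1:] + degree H"
        by (rule degree_mult_eq) (use H0 in auto)
      then have dG: "degree G = Suc (Suc (degree H))" using GH by simp
      have "lead_coeff ([:u^2+v^2, -2*u, 1:] * H) = lead_coeff [:u^2+v^2, -2*u, 1:] * lead_coeff H"
        by (rule lead_coeff_mult)
      then have lH: "lead_coeff H = 1" using GH less.prems by simp
      have IH: "sqrt m ^ degree H \<le> norm (ev H a)" using less.hyps[of H] dG lH by simp
      have "sqrt m ^ 2 \<le> norm (ev [:u^2+v^2, -2*u, 1:] a)" using hm[of "v^2" u] m0 by simp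
      then have "sqrt m ^ 2 * sqrt m ^ degree H \<le> norm (ev [:u^2+v^2, -2*u, 1:] a) * norm (ev H a)"
        using IH m0 by (intro mult_mono) auto
      moreover have "ev G a = ev [:u^2+v^2, -2*u, 1:] a * ev H a" by (simp only: GH ev_mult)
      ultimately show ?thesis using dG by (simp add: norm_mult power_add[symmetric])
    qed
  qed
qed

lemma ost_bound:
  fixes a :: "'a::real_normed_field"
  assumes m0: "0 < m" and hm: "\<And>x c. c \<ge> 0 \<Longrightarrow> m \<le> norm (ev [:x^2+c, -2*x, 1:] a)"
    and hc: "norm (ev [:x0^2+c, -2*x0, 1:] a) = m" and n1: "odd n"
  shows "norm (ev [:x0^2+(c+m/2), -2*x0, 1:] a) \<le> m + m * (1/2)^n"
proof -
  define \<epsilon> where "\<epsilon> = m/2"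
  define P where "P = [:x0^2+c, -2*x0, 1:]"
  define Q where "Q = [:x0^2+(c+m/2), -2*x0, 1:]"
  define H where "H = (\<Sum>i<n. [:-\<epsilon>:]^(n - Suc i) * P^i)"
  define F where "F = P^n + [:\<epsilon>^n:]"
  have "P^n - [:-\<epsilon>:]^n = (P - [:-\<epsilon>:]) * H"
    unfolding H_def by (rule power_diff_sumr2)
  moreover have "[:-\<epsilon>:]^n = [:-(\<epsilon>^n):]" using n1 by (simp add: poly_const_pow)
  moreover have "P - [:-\<epsilon>:] = Q" by (simp add: P_def Q_def \<epsilon>_def)
  moreover have "[:-(\<epsilon>^n):] = - [:\<epsilon>^n:]" by simp
  ultimately have FQH: "F = Q * H" unfolding F_def by (metis diff_minus_eq_add)
  have n0: "n \<ge> 1" using n1 by (cases n) auto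
  have P0: "P \<noteq> 0" and dP: "degree P = 2" and lP: "lead_coeff P = 1" by (simp_all add: P_def)
  have dPn: "degree (P^n) = 2*n" using degree_power_eq[OF P0, of n] dP by simp
  have dF: "degree F = 2*n" unfolding F_def using dPn n0 by (subst degree_add_eq_left) auto
  have "lead_coeff F = coeff (P^n) (2*n) + coeff [:\<epsilon>^n:] (2*n)" using dF by (simp add: F_def)
  also have "coeff (P^n) (2*n) = 1" using dPn lead_coeff_power[of P n] lP by simp
  also have "coeff [:\<epsilon>^n:] (2*n) = 0" using n0 by (simp add: coeff_pCons split: nat.split)
  finally have lF: "lead_coeff F = 1" by simp
  have Q0: "Q \<noteq> 0" and dQ: "degree Q = 2" and lQ: "lead_coeff Q = 1" by (simp_all add: Q_def)
  have H0: "H \<noteq> 0" using FQH lF by auto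
  have "degree (Q * H) = degree Q + degree H" by (rule degree_mult_eq[OF Q0 H0])
  then have dH: "degree H = 2*n - 2" using FQH dF dQ by simp
  have "lead_coeff (Q * H) = lead_coeff Q * lead_coeff H" by (rule lead_coeff_mult)
  then have lH: "lead_coeff H = 1" using FQH lF lQ by simp
  have m0': "0 \<le> m" using m0 by simp
  have "sqrt m ^ degree H \<le> norm (ev H a)" by (rule ev_lower[OF m0' hm lH])
  moreover have "sqrt m ^ degree H = m ^ (n - 1)"
  proof -
    have "2*n - 2 = 2 * (n - 1)" by simp
    then have "sqrt m ^ (2*n-2) = (sqrt m ^ 2) ^ (n - 1)" by (simp add: power_mult)
    then show ?thesis using dH m0 by simp
  qed
  ultimately have Hb: "m ^ (n - 1) \<le> norm (ev H a)" by simp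
  have "ev F a = ev Q a * ev H a" by (simp only: FQH ev_mult)
  then have "norm (ev Q a) * norm (ev H a) = norm (ev P a ^ n + of_real (\<epsilon>^n))"
    by (simp add: F_def ev_add ev_power norm_mult)
  also have "\<dots> \<le> norm (ev P a) ^ n + \<epsilon>^n"
    by (rule order_trans[OF norm_triangle_ineq]) (simp add: norm_power \<epsilon>_def m0' abs_of_nonneg)
  also have "\<dots> = m ^ (n-1) * (m + m * (1/2)^n)"
    using hc n0 by (simp add: P_def \<epsilon>_def power_divide algebra_simps flip: power_Suc)
  finally have "norm (ev Q a) * norm (ev H a) \<le> m ^ (n-1) * (m + m * (1/2)^n)" .
  moreover have "norm (ev Q a) * m ^ (n-1) \<le> norm (ev Q a) * norm (ev H a)"
    using Hb by (intro mult_left_mono) auto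
  ultimately have "norm (ev Q a) * m ^ (n-1) \<le> (m + m * (1/2)^n) * m ^ (n-1)" by (simp add: algebra_simps)
  then show ?thesis using m0 unfolding Q_def by (simp add: mult_le_cancel_right)
qed

lemma ev_quad: "ev [:s, t, 1:] a = of_real s + a * (of_real t + a)"
  by simp

lemma ev_quad_lower:
  fixes a :: "'a::real_normed_field"
  shows "s - norm a * (\<bar>t\<bar> + norm a) \<le> norm (ev [:s, t, 1:] a)"
proof -
  have "norm (a * (of_real t + a)) \<le> norm a * (\<bar>t\<bar> + norm a)"
    by (simp add: norm_mult mult_left_mono norm_triangle_le)
  moreover have "s - norm (a * (of_real t + a)) \<le> norm (of_real s + a * (of_real t + a))"
    using norm_diff_ineq[of "of_real s :: 'a" "a * (of_real t + a)"] by simp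
  ultimately show ?thesis by simp
qed

lemma quad_root:
  fixes a :: "'a::real_normed_field"
  shows "\<exists>x c. c \<ge> 0 \<and> ev [:x^2+c, -2*x, 1:] a = 0"
proof -
  define A where "A = norm a"
  define f where "f = (\<lambda>z::real\<times>real. norm (of_real ((fst z)^2 + (snd z)^2) + a * (of_real (-2*fst z) + a)))"
  have fev: "f z = norm (ev [:(fst z)^2 + (snd z)^2, -2*fst z, 1:] a)" for z by (simp add: f_def)
  have cont: "continuous_on UNIV f" unfolding f_def by (intro continuous_intros)
  define R where "R = 3*A + 1"
  have "(0::real\<times>real) \<in> cball 0 R" unfolding R_def A_def by simp
  then have ne: "cball (0::real\<times>real) R \<noteq> {}" by blast
  have "\<exists>x\<in>cball 0 R. \<forall>y\<in>cball 0 R. f x \<le> f y"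
    by (rule continuous_attains_inf[OF compact_cball ne continuous_on_subset[OF cont]]) auto
  then obtain z0 where z0: "z0 \<in> cball 0 R" "\<And>z. z \<in> cball 0 R \<Longrightarrow> f z0 \<le> f z" by blast
  have A0: "A \<ge> 0" by (simp add: A_def)
  have f0: "f 0 = A^2" by (simp add: f_def A_def norm_mult power2_eq_square)
  have fmin: "f z0 \<le> f z" for z
  proof (cases "z \<in> cball 0 R")
    case True then show ?thesis using z0 by blast
  next
    case False
    define \<rho> where "\<rho> = norm z"
    have \<rho>R: "\<rho> > R" using False by (simp add: \<rho>_def)
    have \<rho>sq: "\<rho>^2 = (fst z)^2 + (snd z)^2" 
      by (simp add: \<rho>_def norm_prod_def)
    have fx: "\<bar>fst z\<bar> \<le> \<rho>" unfolding \<rho>_def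
      using norm_fst_le[of "fst z" "snd z"] by simp
    have "f z \<ge> (fst z)^2 + (snd z)^2 - A * (\<bar>-2*fst z\<bar> + A)"
      using ev_quad_lower[of "(fst z)^2 + (snd z)^2" a "-2*fst z"] by (simp add: fev A_def)
    then have "f z \<ge> \<rho>^2 - A * (2*\<rho> + A)"
      using \<rho>sq fx A0 by (smt (verit, best) mult_left_mono abs_mult)
    moreover have "\<rho>^2 - A * (2*\<rho> + A) > A^2"
    proof -
      have "\<rho> - 2*A > A + 1" using \<rho>R R_def by simp
      then have "\<rho> * (\<rho> - 2*A) \<ge> \<rho> * (A+1)" using \<rho>R R_def A0 by (intro mult_left_mono) auto
      moreover have "\<rho> * (A+1) > (3*A) * (A+1)" using \<rho>R R_def A0
        by (intro mult_strict_right_mono) auto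
      ultimately have h1: "\<rho>*\<rho> - 2*(A*\<rho>) \<ge> A*\<rho> + \<rho>" and h2: "A*\<rho> + \<rho> > 3*(A*A) + 3*A"
        by (simp_all add: algebra_simps)
      have "A*A \<ge> 0" using A0 by simp
      then have "\<rho>*\<rho> - 2*(A*\<rho>) - A*A > A*A" using h1 h2 A0 by linarith
      then show ?thesis by (simp add: power2_eq_square algebra_simps)
    qed
    moreover have "f z0 \<le> f 0" using z0 R_def A0 by simp
    ultimately show ?thesis using f0 by simp
  qed
  define m where "m = f z0"
  define x0 where "x0 = fst z0"
  define c0 where "c0 = (snd z0)^2"
  have hm: "m \<le> norm (ev [:x^2+c, -2*x, 1:] a)" if "c \<ge> 0" for x c
    using fmin[of "(x, sqrt c)"] that by (simp add: fev m_def)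
  have hc0: "norm (ev [:x0^2+c0, -2*x0, 1:] a) = m" by (simp add: fev m_def x0_def c0_def)
  show ?thesis
  proof (cases "m = 0")
    case True then show ?thesis using hc0 by (intro exI[of _ x0] exI[of _ c0]) (simp add: c0_def)
  next
    case False
    then have m0: "m > 0" by (simp add: m_def f_def)
    have step: "norm (ev [:x0^2+(c+m/2), -2*x0, 1:] a) = m"
      if "c \<ge> 0" "norm (ev [:x0^2+c, -2*x0, 1:] a) = m" for c
    proof (rule antisym)
      show "m \<le> norm (ev [:x0^2+(c+m/2), -2*x0, 1:] a)" by (rule hm) (use that m0 in simp)
      show "norm (ev [:x0^2+(c+m/2), -2*x0, 1:] a) \<le> m"
      proof (rule ccontr)
        define N where "N = norm (ev [:x0^2+(c+m/2), -2*x0, 1:] a)"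
        assume "\<not> ?thesis"
        then have d: "(N - m)/m > 0" using m0 by (simp add: N_def)
        obtain n where n: "(1/2::real)^n < (N - m)/m"
          using real_arch_pow_inv[OF d, of "1/2"] by auto
        have "(1/2::real)^(2*n+1) \<le> (1/2)^n" by (rule power_decreasing) auto
        then have "(1/2::real)^(2*n+1) < (N - m)/m" using n by linarith
        then have "(1/2::real)^(2*n+1) * m < N - m" using pos_less_divide_eq[OF m0] by blast
        moreover have "N \<le> m + m * (1/2)^(2*n+1)" unfolding N_def
          by (rule ost_bound[OF m0 hm that(2)]) auto
        ultimately show False by (simp add: mult.commute)
      qed
    qed
    have all: "norm (ev [:x0^2+(c0 + real k * (m/2)), -2*x0, 1:] a) = m" for k
    proof (induction k)
      case 0 then show ?case using hc0 by simp
    next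
      case (Suc k)
      have nn: "c0 + real k * (m/2) \<ge> 0" using m0 by (simp add: c0_def)
      have e: "x0^2 + (c0 + real k * (m/2) + m/2) = x0^2 + (c0 + real (Suc k) * (m/2))"
        by (simp add: algebra_simps)
      from step[OF nn Suc] show ?case unfolding e .
    qed
    obtain k :: nat where k: "real k > (m + A * (\<bar>2*x0\<bar> + A)) / (m/2)"
      using reals_Archimedean2 by blast
    have "x0^2 + (c0 + real k * (m/2)) - A * (\<bar>-2*x0\<bar> + A) \<le> m"
      using ev_quad_lower[of "x0^2 + (c0 + real k * (m/2))" a "-2*x0"] all[of k] by (simp add: A_def)
    moreover have "real k * (m/2) > m + A * (\<bar>2*x0\<bar> + A)" using k m0 by (simp add: field_simps)
    moreover have "x0^2 + c0 \<ge> 0" by (simp add: c0_def)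
    ultimately show ?thesis by simp
  qed
qed

lemma quad_root':
  fixes a :: "'a::real_normed_field"
  shows "\<exists>x c. c \<ge> 0 \<and> (a - of_real x)^2 = - of_real c"
proof -
  obtain x c where "c \<ge> 0" "ev [:x^2+c, -2*x, 1:] a = 0" using quad_root by blast
  then show ?thesis
    by (intro exI[of _ x] exI[of _ c]) (auto simp: power2_eq_square algebra_simps eq_neg_iff_add_eq_0)
qed

lemma rat_approx: "e > 0 \<Longrightarrow> \<exists>q\<in>\<rat>. \<bar>(x::real) - q\<bar> < e"
  using Rats_dense_in_real[of "x - e" x] by (metis abs_diff_less_iff diff_less_eq less_add_same_cancel1
      less_diff_eq order_less_imp_le order_less_le_trans abs_minus_commute) 

lemma sep_field:
  "\<exists>D::'a::real_normed_field set. countable D \<and> 1 \<in> D \<and> 0 \<in> D \<and>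
     (\<forall>a e. e > 0 \<longrightarrow> (\<exists>d\<in>D. norm (a - d) < e))"
proof (cases "\<forall>a::'a. a \<in> range of_real")
  case True
  define D where "D = (of_real ` \<rat> :: 'a set)"
  have "countable D" unfolding D_def by (simp add: countable_rat)
  moreover have "1 \<in> D" "0 \<in> D" unfolding D_def
    by (metis Rats_1 image_eqI of_real_1, metis Rats_0 image_eqI of_real_0)
  moreover have "\<exists>d\<in>D. norm (a - d) < e" if epos: "e > 0" for a :: 'a and e
  proof -
    obtain r where r: "a = of_real r" using True by auto
    obtain q where "q \<in> \<rat>" "\<bar>r - q\<bar> < e" using rat_approx[OF epos] by blast
    then show ?thesis unfolding D_def using r
      by (intro bexI[of _ "of_real q"]) (auto simp flip: of_real_diff)
  qed
  ultimately show ?thesis by blast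
next
  case False
  then obtain a0 :: 'a where a0: "a0 \<notin> range of_real" by blast
  obtain x c where xc: "c \<ge> 0" "(a0 - of_real x)^2 = - of_real c" using quad_root' by blast
  have c0: "c \<noteq> 0"
  proof
    assume "c = 0"
    then have "a0 = of_real x" using xc by simp
    then show False using a0 by auto
  qed
  define j where "j = (a0 - of_real x) / of_real (sqrt c)"
  have j2: "j^2 = -1"
    using xc c0 by (simp add: j_def power_divide of_real_power[symmetric])
  have nj: "norm j = 1"
  proof -
    have "norm j ^ 2 = 1" using j2 by (metis norm_minus_cancel norm_one norm_power)
    then show ?thesis by (smt (verit) norm_ge_zero power2_eq_1_iff)
  qed
  have rep: "\<exists>\<alpha> \<beta>. b = of_real \<alpha> + of_real \<beta> * j" for b :: 'a
  proof -
    obtain x' c' where xc': "c' \<ge> 0" "(b - of_real x')^2 = - of_real c'" using quad_root' by blast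
    define s where "s = of_real (sqrt c') * j"
    have "s^2 = - of_real c'" using xc' j2 by (simp add: s_def power_mult_distrib of_real_power[symmetric])
    then have "(b - of_real x' - s) * (b - of_real x' + s) = 0"
      using xc' by (simp add: power2_eq_square algebra_simps)
    then have "b - of_real x' - s = 0 \<or> b - of_real x' + s = 0" by simp
    then have "b = of_real x' + s \<or> b = of_real x' - s" by (auto simp: algebra_simps)
    then have "b = of_real x' + of_real (sqrt c') * j \<or> b = of_real x' + of_real (- sqrt c') * j"
      by (auto simp: s_def)
    then show ?thesis by blast
  qed
  define D where "D = (\<lambda>(q1,q2). of_real q1 + of_real q2 * j) ` (\<rat> \<times> \<rat>)"
  have "countable D" unfolding D_def by (simp add: countable_rat)
  moreover have "1 \<in> D" "0 \<in> D" unfolding D_def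
    by (force intro!: image_eqI[of _ _ "(1,0)"], force intro!: image_eqI[of _ _ "(0,0)"])
  moreover have "\<exists>d\<in>D. norm (b - d) < e" if epos: "e > 0" for b :: 'a and e
  proof -
    obtain \<alpha> \<beta> where b: "b = of_real \<alpha> + of_real \<beta> * j" using rep by blast
    obtain q1 where q1: "q1 \<in> \<rat>" "\<bar>\<alpha> - q1\<bar> < e/2" using rat_approx[of "e/2"] epos by auto
    obtain q2 where q2: "q2 \<in> \<rat>" "\<bar>\<beta> - q2\<bar> < e/2" using rat_approx[of "e/2"] epos by auto
    have "b - (of_real q1 + of_real q2 * j) = of_real (\<alpha> - q1) + of_real (\<beta> - q2) * j"
      by (simp add: b algebra_simps)
    then have "norm (b - (of_real q1 + of_real q2 * j)) \<le> \<bar>\<alpha> - q1\<bar> + \<bar>\<beta> - q2\<bar>"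
      by (metis nj norm_mult norm_of_real norm_triangle_ineq mult.right_neutral)
    then show ?thesis using q1 q2 unfolding D_def
      by (intro bexI[of _ "of_real q1 + of_real q2 * j"]) auto
  qed
  ultimately show ?thesis by blast
qed

definition W :: "real \<Rightarrow> nat \<Rightarrow> nat \<Rightarrow> real" where
  "W \<mu> k n = (\<Prod>i\<in>{Suc k..k+n}. 1 + \<mu> / real i)"

lemma W_0[simp]: "W \<mu> k 0 = 1"
  by (simp add: W_def)

lemma W_Suc: "W \<mu> k (Suc n) = (1 + \<mu> / real (Suc k)) * W \<mu> (Suc k) n"
proof -
  have "{Suc k..k + Suc n} = insert (Suc k) {Suc (Suc k)..Suc k + n}" by auto
  then show ?thesis by (simp add: W_def)
qed

lemma W_ge1: "\<mu> \<ge> 0 \<Longrightarrow> W \<mu> k n \<ge> 1"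
  unfolding W_def by (intro prod_ge_1) auto

lemma W_pos: "\<mu> \<ge> 0 \<Longrightarrow> W \<mu> k n > 0"
  using W_ge1[of \<mu> k n] by simp

lemma bws_iter: "(bws \<mu> ^^ n) x k = of_real (W \<mu> k n) * x (k + n)"
proof (induction n arbitrary: k)
  case 0 then show ?case by simp
next
  case (Suc n)
  have "(bws \<mu> ^^ Suc n) x k = bws \<mu> ((bws \<mu> ^^ n) x) k" by simp
  also have "\<dots> = of_real (1 + \<mu> / real (k + 1)) * (of_real (W \<mu> (Suc k) n) * x (Suc k + n))"
    by (simp add: bws_def Suc)
  also have "\<dots> = of_real (W \<mu> k (Suc n)) * x (k + Suc n)"
    by (simp add: W_Suc)
  finally show ?case .
qed

lemma W_mono: "0 \<le> \<mu>0 \<Longrightarrow> \<mu>0 \<le> \<mu> \<Longrightarrow> W \<mu>0 k n \<le> W \<mu> k n"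
  unfolding W_def by (intro prod_mono) (auto simp: divide_right_mono)

lemma step_upper:
  assumes "\<eta> \<ge> 0" "n \<ge> 1"
  shows "1 + \<eta> / real (Suc n) \<le> (real (Suc n) / real n) powr \<eta>"
proof -
  have n0: "real n > 0" using assms by simp
  have "ln (real n / real (Suc n)) \<le> real n / real (Suc n) - 1"
    by (rule ln_le_minus_one) (use n0 in simp)
  also have "\<dots> = - 1 / real (Suc n)" by (simp add: field_simps)
  finally have l: "1 / real (Suc n) \<le> ln (real (Suc n) / real n)"
    using n0 by (simp add: ln_div)
  have "1 + \<eta> / real (Suc n) \<le> exp (\<eta> / real (Suc n))" by (rule exp_ge_add_one_self)
  also have "\<dots> \<le> exp (\<eta> * ln (real (Suc n) / real n))"
    using mult_left_mono[OF l assms(1)] by simp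
  also have "\<dots> = (real (Suc n) / real n) powr \<eta>"
    using n0 by (simp add: powr_def mult.commute)
  finally show ?thesis .
qed

lemma prod_upper:
  assumes "\<eta> \<ge> 0" "1 \<le> a" "a \<le> b"
  shows "(\<Prod>i\<in>{Suc a..b}. 1 + \<eta> / real i) \<le> (real b / real a) powr \<eta>"
  using assms(3)
proof (induction b rule: dec_induct)
  case base then show ?case using assms by simp
next
  case (step n)
  have n1: "n \<ge> 1" using step assms by simp
  have "(\<Prod>i\<in>{Suc a..Suc n}. 1 + \<eta> / real i) = (\<Prod>i\<in>{Suc a..n}. 1 + \<eta> / real i) * (1 + \<eta> / real (Suc n))"
    using step by (simp add: prod.nat_ivl_Suc')
  also have "\<dots> \<le> (real n / real a) powr \<eta> * ((real (Suc n) / real n) powr \<eta>)"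
    using step.IH step_upper[OF assms(1) n1] assms(1)
    by (intro mult_mono) (auto intro!: prod_nonneg simp: add_nonneg_nonneg)
  also have "\<dots> = (real (Suc n) / real a) powr \<eta>"
    using n1 assms by (simp add: powr_mult[symmetric])
  finally show ?case .
qed

lemma prod_upper0:
  assumes "\<eta> \<ge> 0" "a \<le> b" "1 \<le> b"
  shows "(\<Prod>i\<in>{Suc a..b}. 1 + \<eta> / real i) \<le> (1 + \<eta>) * real b powr \<eta>"
proof (cases "a = 0")
  case True
  have "{Suc 0..b} = insert 1 {Suc 1..b}" using assms by auto
  then have "(\<Prod>i\<in>{Suc a..b}. 1 + \<eta> / real i) = (1 + \<eta>) * (\<Prod>i\<in>{Suc 1..b}. 1 + \<eta> / real i)"
    using True by simp
  also have "\<dots> \<le> (1 + \<eta>) * (real b / real 1) powr \<eta>"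
    using prod_upper[OF assms(1), of 1 b] assms by (intro mult_left_mono) auto
  finally show ?thesis by simp
next
  case False
  have "(\<Prod>i\<in>{Suc a..b}. 1 + \<eta> / real i) \<le> (real b / real a) powr \<eta>"
    using prod_upper[OF assms(1), of a b] assms False by simp
  also have "\<dots> \<le> real b powr \<eta>"
    using False assms by (intro powr_mono2) (auto simp: divide_le_eq)
  also have "\<dots> \<le> (1 + \<eta>) * real b powr \<eta>" using assms by simp
  finally show ?thesis .
qed

lemma bern_powr:
  fixes \<delta> x :: real
  assumes "0 \<le> \<delta>" "\<delta> \<le> 1" "x \<ge> 0"
  shows "(1 + x) powr \<delta> \<le> 1 + \<delta> * x"
proof -
  have "(1 + x) powr \<delta> * 1 powr (1 - \<delta>) \<le> \<delta> * (1 + x) + (1 - \<delta>) * 1"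
    using Youngs_inequality_0[of \<delta> "1-\<delta>" "1+x" 1] assms by simp
  then show ?thesis by (simp add: algebra_simps)
qed

lemma frac_chain: "(x::real) \<noteq> 0 \<Longrightarrow> x / z * (y / x) = y / z"
  by (cases "z = 0") (simp_all add: field_simps)

lemma prod_lower_aux:
  assumes "0 \<le> \<delta>" "\<delta> \<le> 1" "1 + \<delta> \<le> \<mu>" "a \<le> b"
  shows "(real (b+1) / real (a+1)) * (real (b+2) / real (a+2)) powr \<delta> \<le> (\<Prod>i\<in>{Suc a..b}. 1 + \<mu> / real i)"
  using assms(4)
proof (induction b rule: dec_induct)
  case base then show ?case by simp
next
  case (step n)
  have f: "real (n+2) / real (n+1) * (real (n+3) / real (n+2)) powr \<delta> \<le> 1 + \<mu> / real (Suc n)"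
  proof -
    have "(real (n+3) / real (n+2)) powr \<delta> = (1 + 1 / real (n+2)) powr \<delta>"
      by (simp add: field_simps)
    also have "\<dots> \<le> 1 + \<delta> * (1 / real (n+2))" by (rule bern_powr) (use assms in auto)
    finally have "real (n+2) / real (n+1) * (real (n+3) / real (n+2)) powr \<delta> \<le>
        real (n+2) / real (n+1) * (1 + \<delta> * (1 / real (n+2)))"
      by (intro mult_left_mono) auto
    also have "\<dots> = (real n + 2 + \<delta>) / (real n + 1)"
    proof -
      have e0: "real (n+2) * (1 + \<delta> * (1 / real (n+2))) = real n + 2 + \<delta>"
        by (simp add: field_simps)
      show ?thesis unfolding times_divide_eq_left e0 by simp
    qed
    also have "\<dots> \<le> (real n + 1 + \<mu>) / (real n + 1)"
      using assms by (intro divide_right_mono) auto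
    also have "\<dots> = 1 + \<mu> / real (Suc n)" by (simp add: field_simps)
    finally show ?thesis .
  qed
  have "(real (Suc n+1) / real (a+1)) * (real (Suc n+2) / real (a+2)) powr \<delta> =
      ((real (n+1) / real (a+1)) * (real (n+2) / real (a+2)) powr \<delta>) *
      (real (n+2) / real (n+1) * (real (n+3) / real (n+2)) powr \<delta>)"
  proof -
    have e1: "real (Suc n+1) = real (n+2)" "real (Suc n+2) = real (n+3)" by simp_all
    have r1: "real (Suc n+1) / real (a+1) = real (n+1) / real (a+1) * (real (n+2) / real (n+1))"
      unfolding e1 by (rule frac_chain[symmetric]) simp
    have r2: "real (Suc n+2) / real (a+2) = real (n+2) / real (a+2) * (real (n+3) / real (n+2))"
      unfolding e1 by (rule frac_chain[symmetric]) simp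
    have r3: "(real (Suc n+2) / real (a+2)) powr \<delta> = (real (n+2) / real (a+2)) powr \<delta> * (real (n+3) / real (n+2)) powr \<delta>"
      unfolding r2 by (rule powr_mult; simp)
    show ?thesis unfolding r1 r3 by (simp only: mult.assoc mult.left_commute mult.commute)
  qed
  also have "\<dots> \<le> (\<Prod>i\<in>{Suc a..n}. 1 + \<mu> / real i) * (1 + \<mu> / real (Suc n))"
    using step.IH f using assms by (intro mult_mono) (auto simp: divide_nonneg_nonneg intro!: prod_nonneg add_nonneg_nonneg)
  also have "\<dots> = (\<Prod>i\<in>{Suc a..Suc n}. 1 + \<mu> / real i)"
    using step by (simp add: prod.nat_ivl_Suc')
  finally show ?case .
qed

lemma prod_lower:
  assumes "0 \<le> \<delta>" "\<delta> \<le> 1" "1 + \<delta> \<le> \<mu>" "a \<le> b"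
  shows "(real (b+1) / real (a+2)) powr (1 + \<delta>) \<le> (\<Prod>i\<in>{Suc a..b}. 1 + \<mu> / real i)"
proof -
  have "(real (b+1) / real (a+2)) powr (1 + \<delta>) = (real (b+1) / real (a+2)) * (real (b+1) / real (a+2)) powr \<delta>"
    by (simp add: powr_add)
  also have "\<dots> \<le> (real (b+1) / real (a+1)) * (real (b+2) / real (a+2)) powr \<delta>"
    using assms by (intro mult_mono powr_mono2 divide_left_mono divide_right_mono) auto
  also have "\<dots> \<le> (\<Prod>i\<in>{Suc a..b}. 1 + \<mu> / real i)" by (rule prod_lower_aux[OF assms])
  finally show ?thesis .
qed

lemma ratio_factor:
  assumes "0 \<le> \<mu>0" "\<mu>0 \<le> \<mu>" "i > 0"
  shows "(1 + \<mu> / real i) \<le> (1 + \<mu>0 / real i) * (1 + (\<mu> - \<mu>0) / real i)"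
proof -
  have "(1 + \<mu>0 / real i) * (1 + (\<mu> - \<mu>0) / real i) = 1 + \<mu> / real i + \<mu>0 * (\<mu> - \<mu>0) / (real i * real i)"
    using assms by (simp add: field_simps)
  moreover have "\<mu>0 * (\<mu> - \<mu>0) / (real i * real i) \<ge> 0" using assms by simp
  ultimately show ?thesis by simp
qed

lemma W_ratio:
  assumes "0 \<le> \<mu>0" "\<mu>0 \<le> \<mu>"
  shows "W \<mu> k n \<le> W \<mu>0 k n * (\<Prod>i\<in>{Suc k..k+n}. 1 + (\<mu> - \<mu>0) / real i)"
  unfolding W_def prod.distrib[symmetric]
  using assms by (intro prod_mono) (auto intro: ratio_factor simp: add_nonneg_nonneg)

definition psum :: "real \<Rightarrow> (nat \<Rightarrow> 'a::real_normed_vector) \<Rightarrow> real" where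
  "psum p x = (\<Sum>n. norm (x n) powr p)"

lemma lp_summable: "x \<in> lp p \<Longrightarrow> summable (\<lambda>n. norm (x n) powr p)"
  by (simp add: lp_def)

lemma lpI: "summable (\<lambda>n. norm (x n) powr p) \<Longrightarrow> x \<in> lp p"
  by (simp add: lp_def)

lemma psum_nonneg: "x \<in> lp p \<Longrightarrow> psum p x \<ge> 0"
  unfolding psum_def by (intro suminf_nonneg lp_summable) auto

lemma lp_norm_psum: "lp_norm p x = psum p x powr (1/p)"
  by (simp add: lp_norm_def psum_def)

lemma lp_norm_less:
  assumes "p > 0" "e > 0" "x \<in> lp p"
  shows "lp_norm p x < e \<longleftrightarrow> psum p x < e powr p"
proof -
  have s0: "psum p x \<ge> 0" using psum_nonneg[OF assms(3)] .
  have inv: "(psum p x powr (1/p)) powr p = psum p x"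
    using s0 assms(1) by (simp add: powr_powr)
  show ?thesis
  proof
    assume "lp_norm p x < e"
    then have "psum p x powr (1/p) < e" by (simp add: lp_norm_psum)
    then have "(psum p x powr (1/p)) powr p < e powr p"
      using assms by (intro powr_less_mono2) auto
    then show "psum p x < e powr p" using inv by simp
  next
    assume "psum p x < e powr p"
    then have "psum p x powr (1/p) < (e powr p) powr (1/p)"
      using assms s0 by (intro powr_less_mono2) auto
    then show "lp_norm p x < e" using assms by (simp add: lp_norm_psum powr_powr)
  qed
qed

lemma coord_le_psum:
  assumes "x \<in> lp p"
  shows "norm (x n) powr p \<le> psum p x"
proof -
  have "sum (\<lambda>n. norm (x n) powr p) {n} \<le> psum p x"
    unfolding psum_def by (rule sum_le_suminf) (use lp_summable[OF assms] in auto)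
  then show ?thesis by simp
qed

lemma coord_le_norm:
  assumes "x \<in> lp p" "p > 0"
  shows "norm (x n) \<le> lp_norm p x"
proof -
  have "(norm (x n) powr p) powr (1/p) \<le> psum p x powr (1/p)"
    using coord_le_psum[OF assms(1)] assms by (intro powr_mono2) auto
  then show ?thesis using assms by (simp add: lp_norm_psum powr_powr)
qed

lemma powr_sum_le:
  fixes a b p :: real
  assumes "a \<ge> 0" "b \<ge> 0" "p \<ge> 0"
  shows "(a + b) powr p \<le> 2 powr p * (a powr p + b powr p)"
proof -
  have "(a + b) powr p \<le> (2 * max a b) powr p"
    using assms by (intro powr_mono2) auto
  also have "\<dots> = 2 powr p * max a b powr p" using assms by (simp add: powr_mult)
  also have "max a b powr p \<le> a powr p + b powr p"
    by (cases "a \<le> b") (auto simp: max_def)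
  then have "2 powr p * max a b powr p \<le> 2 powr p * (a powr p + b powr p)"
    by (intro mult_left_mono) auto
  finally show ?thesis .
qed

lemma norm_add_powr:
  fixes x y :: "'a::real_normed_vector"
  assumes "p \<ge> 0"
  shows "norm (x + y) powr p \<le> 2 powr p * (norm x powr p + norm y powr p)"
proof -
  have "norm (x + y) powr p \<le> (norm x + norm y) powr p"
    using assms by (intro powr_mono2 norm_triangle_ineq) auto
  also have "\<dots> \<le> 2 powr p * (norm x powr p + norm y powr p)"
    by (rule powr_sum_le) (use assms in auto)
  finally show ?thesis .
qed

lemma lp_add:
  assumes "x \<in> lp p" "y \<in> lp p" "p \<ge> 0"
  shows "(\<lambda>n. x n + y n) \<in> lp p"
proof (rule lpI, rule summable_comparison_test[where g = "\<lambda>n. 2 powr p * (norm (x n) powr p + norm (y n) powr p)"])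
  show "\<exists>N. \<forall>n\<ge>N. norm (norm (x n + y n) powr p) \<le> 2 powr p * (norm (x n) powr p + norm (y n) powr p)"
    using norm_add_powr[OF assms(3)] by auto
  show "summable (\<lambda>n. 2 powr p * (norm (x n) powr p + norm (y n) powr p))"
    using lp_summable[OF assms(1)] lp_summable[OF assms(2)] by (intro summable_mult summable_add)
qed

lemma psum_add_le:
  assumes "x \<in> lp p" "y \<in> lp p" "p \<ge> 0"
  shows "psum p (\<lambda>n. x n + y n) \<le> 2 powr p * (psum p x + psum p y)"
proof -
  have sx: "summable (\<lambda>n. norm (x n) powr p)" and sy: "summable (\<lambda>n. norm (y n) powr p)"
    using assms by (auto intro: lp_summable)
  have "psum p (\<lambda>n. x n + y n) \<le> (\<Sum>n. 2 powr p * (norm (x n) powr p + norm (y n) powr p))"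
    unfolding psum_def
    by (intro suminf_le norm_add_powr assms lp_summable[OF lp_add[OF assms]] summable_mult summable_add sx sy)
  also have "\<dots> = 2 powr p * (\<Sum>n. norm (x n) powr p + norm (y n) powr p)"
    by (rule suminf_mult) (intro summable_add sx sy)
  also have "(\<Sum>n. norm (x n) powr p + norm (y n) powr p) = psum p x + psum p y"
    unfolding psum_def by (rule suminf_add[OF sx sy, symmetric])
  finally show ?thesis .
qed

lemma lp_scale:
  fixes c :: "'a::real_normed_field"
  assumes "x \<in> lp p"
  shows "(\<lambda>n. c * x n) \<in> lp p" "psum p (\<lambda>n. c * x n) = norm c powr p * psum p x"
proof -
  have e: "norm (c * x n) powr p = norm c powr p * norm (x n) powr p" for n
    by (simp add: norm_mult powr_mult)
  show "(\<lambda>n. c * x n) \<in> lp p" unfolding e lp_def using lp_summable[OF assms] by (simp add: e summable_mult)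
  show "psum p (\<lambda>n. c * x n) = norm c powr p * psum p x"
    unfolding psum_def e using lp_summable[OF assms] by (simp add: suminf_mult)
qed

lemma lp_zero: "p > 0 \<Longrightarrow> (\<lambda>n. 0) \<in> lp p"
  by (simp add: lp_def)

lemma lp_finite_support:
  assumes "\<And>k. k \<ge> J \<Longrightarrow> y k = 0" "p > 0"
  shows "y \<in> lp p"
proof (rule lpI, rule summable_comparison_test'[where g = "\<lambda>_. 0" and N = J])
  show "summable (\<lambda>_. 0::real)" by simp
  show "norm (norm (y n) powr p) \<le> 0" if "J \<le> n" for n using assms that by simp
qed

lemma lp_minus:
  assumes "x \<in> lp p"
  shows "(\<lambda>n. - x n) \<in> lp p"
  using assms by (simp add: lp_def)

lemma lp_diff:
  assumes "x \<in> lp p" "y \<in> lp p" "p \<ge> 0"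
  shows "(\<lambda>n. x n - y n) \<in> lp p"
  using lp_add[OF assms(1) lp_minus[OF assms(2)] assms(3)] by simp

lemma W_le_pow: "\<mu> \<ge> 0 \<Longrightarrow> W \<mu> k n \<le> (1 + \<mu>) ^ n"
proof -
  assume m: "\<mu> \<ge> 0"
  have "W \<mu> k n \<le> (\<Prod>i\<in>{Suc k..k+n}. 1 + \<mu>)"
  proof -
    have "\<mu> / real i \<le> \<mu>" if "i \<ge> 1" for i :: nat
    proof -
      have "\<mu> / real i \<le> \<mu> / 1" using m that by (intro divide_left_mono) auto
      then show ?thesis by simp
    qed
    then show ?thesis unfolding W_def using m by (intro prod_mono) auto
  qed
  also have "\<dots> = (1 + \<mu>) ^ n" by simp
  finally show ?thesis .
qed

lemma bws_lp:
  assumes "\<mu> \<ge> 0" "x \<in> lp p" "p > 0"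
  shows "(bws \<mu> ^^ n) x \<in> lp p"
proof (rule lpI, rule summable_comparison_test[where g = "\<lambda>k. ((1 + \<mu>) ^ n) powr p * norm (x (k + n)) powr p"])
  show "\<exists>N. \<forall>k\<ge>N. norm (norm ((bws \<mu> ^^ n) x k) powr p) \<le> ((1 + \<mu>) ^ n) powr p * norm (x (k + n)) powr p"
  proof (intro exI allI impI)
    fix k
    have "norm ((bws \<mu> ^^ n) x k) = W \<mu> k n * norm (x (k + n))"
      using W_pos[OF assms(1), of k n] by (simp add: bws_iter norm_mult)
    also have "\<dots> \<le> (1 + \<mu>) ^ n * norm (x (k + n))"
      by (intro mult_right_mono W_le_pow assms) auto
    finally have "norm ((bws \<mu> ^^ n) x k) powr p \<le> ((1 + \<mu>) ^ n * norm (x (k + n))) powr p"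
      using assms by (intro powr_mono2) auto
    also have "\<dots> = ((1 + \<mu>) ^ n) powr p * norm (x (k + n)) powr p"
      using assms by (simp add: powr_mult)
    finally show "norm (norm ((bws \<mu> ^^ n) x k) powr p) \<le> ((1 + \<mu>) ^ n) powr p * norm (x (k + n)) powr p"
      by simp
  qed
  show "summable (\<lambda>k. ((1 + \<mu>) ^ n) powr p * norm (x (k + n)) powr p)"
    using lp_summable[OF assms(2)] by (intro summable_mult) (simp add: summable_iff_shift[where f = "\<lambda>k. norm (x k) powr p"])
qed

lemma lp_open_ball:
  assumes "lp_open p U" "x \<in> U" "p > 0"
  shows "\<exists>e>0. \<forall>y\<in>lp p. psum p (\<lambda>n. y n - x n) < e \<longrightarrow> y \<in> U"
proof -
  obtain e where e: "e > 0" "\<forall>y\<in>lp p. lp_norm p (\<lambda>n. y n - x n) < e \<longrightarrow> y \<in> U"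
    using assms unfolding lp_open_def by blast
  have xl: "x \<in> lp p" using assms unfolding lp_open_def by blast
  show ?thesis
  proof (intro exI[of _ "e powr p"] conjI ballI impI)
    show "e powr p > 0" using e by simp
    fix y assume y: "y \<in> lp p" "psum p (\<lambda>n. y n - x n) < e powr p"
    have "(\<lambda>n. y n - x n) \<in> lp p" using lp_diff[OF y(1) xl] assms by simp
    then have "lp_norm p (\<lambda>n. y n - x n) < e" using lp_norm_less[OF assms(3) e(1)] y by blast
    then show "y \<in> U" using e y by blast
  qed
qed

definition pats :: "'a set \<Rightarrow> (nat \<Rightarrow> 'a::real_normed_field) set" where
  "pats D = {y. (\<forall>k. y k \<in> D) \<and> (\<exists>J. \<forall>k\<ge>J. y k = 0)}"

lemma pats_countable:
  assumes "countable D" "0 \<in> D"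
  shows "countable (pats D)"
proof -
  have "pats D \<subseteq> (\<lambda>xs k. if k < length xs then xs!k else 0) ` lists D"
  proof
    fix y assume y: "y \<in> pats D"
    then obtain J where J: "\<forall>k\<ge>J. y k = 0" by (auto simp: pats_def)
    have "y = (\<lambda>k. if k < length (map y [0..<J]) then (map y [0..<J])!k else 0)"
      using J by (auto simp: fun_eq_iff)
    moreover have "map y [0..<J] \<in> lists D" using y by (auto simp: pats_def)
    ultimately show "y \<in> (\<lambda>xs k. if k < length xs then xs!k else 0) ` lists D" by blast
  qed
  moreover have "countable ((\<lambda>xs k. if k < length xs then xs!k else 0) ` lists D)"
    using assms by simp
  ultimately show ?thesis by (rule countable_subset)
qed

lemma pats_dense:
  assumes D0: "0 \<in> D" and Dd: "\<forall>a e. e > 0 \<longrightarrow> (\<exists>d\<in>D. norm (a - d) < e)"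
    and x: "x \<in> lp p" and p: "p > 0" and e: "\<epsilon> > 0"
  shows "\<exists>y\<in>pats D. psum p (\<lambda>k. y k - x k) < \<epsilon>"
proof -
  have sf: "summable (\<lambda>k. norm (x k) powr p)" using lp_summable[OF x] .
  obtain J where J: "norm (\<Sum>i. norm (x (i + J)) powr p) < \<epsilon>/2"
    using suminf_exist_split[OF _ sf, of "\<epsilon>/2"] e by auto
  define r where "r = (\<epsilon> / (2 * (real J + 1))) powr (1/p)"
  have r0: "r > 0" using e by (simp add: r_def)
  have "\<forall>k. \<exists>d\<in>D. norm (x k - d) < r" using Dd r0 by blast
  then obtain d where d: "\<And>k. d k \<in> D" "\<And>k. norm (x k - d k) < r" by metis
  define y where "y = (\<lambda>k. if k < J then d k else 0)"
  have yP: "y \<in> pats D" unfolding pats_def y_def using d D0 by (auto intro!: exI[of _ J])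
  have yl: "y \<in> lp p" by (rule lp_finite_support[of J]) (use p in \<open>auto simp: y_def\<close>)
  have dl: "(\<lambda>k. y k - x k) \<in> lp p" using lp_diff[OF yl x] p by simp
  have sg: "summable (\<lambda>k. norm (y k - x k) powr p)" using lp_summable[OF dl] .
  have "psum p (\<lambda>k. y k - x k) = (\<Sum>i. norm (y (i + J) - x (i + J)) powr p) + (\<Sum>k<J. norm (y k - x k) powr p)"
    unfolding psum_def by (rule suminf_split_initial_segment[OF sg])
  also have "(\<Sum>i. norm (y (i + J) - x (i + J)) powr p) = (\<Sum>i. norm (x (i + J)) powr p)"
    by (simp add: y_def)
  also have "\<dots> < \<epsilon>/2" using J by simp
  also have "(\<Sum>k<J. norm (y k - x k) powr p) \<le> (\<Sum>k<J. \<epsilon> / (2 * (real J + 1)))"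
  proof (rule sum_mono)
    fix k assume "k \<in> {..<J}"
    then have "norm (y k - x k) = norm (x k - d k)" by (simp add: y_def norm_minus_commute)
    then have "norm (y k - x k) powr p \<le> r powr p"
      using d(2)[of k] p by (intro powr_mono2) auto
    also have "r powr p = \<epsilon> / (2 * (real J + 1))" using e p by (simp add: r_def powr_powr)
    finally show "norm (y k - x k) powr p \<le> \<epsilon> / (2 * (real J + 1))" .
  qed
  also have "\<dots> = real J * \<epsilon> / (2 * (real J + 1))" by simp
  also have "\<dots> \<le> \<epsilon> / 2" using e by (simp add: field_simps)
  finally show ?thesis using yP by (intro bexI[of _ y]) auto
qed

definition PJ :: "(nat \<Rightarrow> 'a::real_normed_field) \<Rightarrow> nat" where
  "PJ y = (LEAST J. \<forall>k\<ge>J. y k = 0)"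

lemma PJ_zero:
  assumes "y \<in> pats D" "k \<ge> PJ y"
  shows "y k = 0"
proof -
  have "\<exists>J. \<forall>k\<ge>J. y k = 0" using assms by (auto simp: pats_def)
  from LeastI_ex[OF this] show ?thesis using assms unfolding PJ_def by blast
qed

definition PY :: "(nat \<Rightarrow> 'a::real_normed_field) \<Rightarrow> real" where
  "PY y = (\<Sum>k<PJ y. norm (y k)) + 1"

lemma PY_ge1: "PY y \<ge> 1"
  unfolding PY_def by (simp add: sum_nonneg)

lemma PY_ge:
  assumes "y \<in> pats D"
  shows "norm (y k) \<le> PY y"
proof (cases "k < PJ y")
  case True
  then have "norm (y k) \<le> (\<Sum>k<PJ y. norm (y k))" by (intro member_le_sum) auto
  then show ?thesis unfolding PY_def by simp
next
  case False then show ?thesis using PJ_zero[OF assms, of k] PY_ge1[of y] by simp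
qed

definition tailf :: "real \<Rightarrow> nat \<Rightarrow> real" where
  "tailf \<delta> L = (\<Sum>d. real (d + Suc L) powr (-(1+\<delta>)))"

lemma tail_summable: "\<delta> > 0 \<Longrightarrow> summable (\<lambda>d. real (d + Suc L) powr (-(1+\<delta>)))"
  using summable_real_powr_iff[of "-(1+\<delta>)"]
    summable_iff_shift[of "\<lambda>n. real n powr (-(1+\<delta>))" "Suc L"] by simp

lemma tailf_nonneg: "\<delta> > 0 \<Longrightarrow> tailf \<delta> L \<ge> 0"
  unfolding tailf_def by (intro suminf_nonneg tail_summable) auto

lemma tailf_small:
  assumes "\<delta> > 0" "r > 0"
  shows "\<exists>N. \<forall>L\<ge>N. tailf \<delta> L < r"
proof -
  have s: "summable (\<lambda>n. real n powr (-(1+\<delta>)))" using summable_real_powr_iff[of "-(1+\<delta>)"] assms by simp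
  obtain N where N: "\<forall>n\<ge>N. norm (\<Sum>i. real (i + n) powr (-(1+\<delta>))) < r"
    using suminf_exist_split[OF assms(2) s] by blast
  show ?thesis
  proof (intro exI allI impI)
    fix L assume "L \<ge> N"
    then have "Suc L \<ge> N" by simp
    then have "norm (\<Sum>i. real (i + Suc L) powr (-(1+\<delta>))) < r" using N by blast
    then show "tailf \<delta> L < r" unfolding tailf_def real_norm_def by linarith
  qed
qed

lemma partial_le_tailf:
  assumes "\<delta> > 0"
  shows "(\<Sum>k\<in>{A..<B}. real (k + 1) powr (-(1+\<delta>))) \<le> tailf \<delta> A"
proof (cases "A \<le> B")
  case True
  have "(\<Sum>k\<in>{A..<B}. real (k + 1) powr (-(1+\<delta>))) = (\<Sum>d<B - A. real (d + Suc A) powr (-(1+\<delta>)))"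
  proof -
    have "{A..<B} = {0 + A..<(B - A) + A}" using True by simp
    then have "(\<Sum>k\<in>{A..<B}. real (k + 1) powr (-(1+\<delta>))) = (\<Sum>d\<in>{0..<B - A}. real (d + A + 1) powr (-(1+\<delta>)))"
      by (simp only: sum.shift_bounds_nat_ivl)
    also have "\<dots> = (\<Sum>d<B - A. real (d + Suc A) powr (-(1+\<delta>)))"
      by (simp add: atLeast0LessThan)
    finally show ?thesis .
  qed
  also have "\<dots> \<le> tailf \<delta> A" unfolding tailf_def
    by (rule sum_le_suminf) (use tail_summable[OF assms] in auto)
  finally show ?thesis .
next
  case False then show ?thesis using tailf_nonneg[OF assms] by simp
qed

lemma harmonic_unbounded:
  "\<exists>r. (\<Sum>i<r. 1 / real (i + c)) > B"
proof (rule ccontr)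
  assume "\<not> ?thesis"
  then have b: "\<And>r. (\<Sum>i<r. 1 / real (i + c)) \<le> B" by (simp add: not_less)
  have "summable (\<lambda>i. 1 / real (i + c))"
    by (rule summableI_nonneg_bounded[where x = B]) (use b in auto)
  then have "summable (\<lambda>i. inverse (real (i + c)))" by (simp add: divide_inverse)
  then have "summable (\<lambda>n. inverse (real n) :: real)"
    using summable_iff_shift[of "\<lambda>n. inverse (real n) :: real" c] by simp
  then show False using not_summable_harmonic by blast
qed

locale constr =
  fixes p :: real and D :: "'a::real_normed_field set"
  assumes p1: "p \<ge> 1" and Dc: "countable D" and D0: "0 \<in> D" and D1: "1 \<in> D"
    and Dd: "\<forall>a e. e > 0 \<longrightarrow> (\<exists>d\<in>D. norm (a - d) < e)"
begin

lemma p0: "p > 0" using p1 by simp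

definition pat :: "nat \<Rightarrow> nat \<Rightarrow> 'a" where "pat j = from_nat_into (pats D) j"

lemma pats_ne: "pats D \<noteq> {}"
  using D0 by (auto simp: pats_def intro!: exI[of _ "\<lambda>_. 0"])

lemma pat_in: "pat j \<in> pats D"
  unfolding pat_def by (rule from_nat_into[OF pats_ne])

lemma pat_surj: "y \<in> pats D \<Longrightarrow> \<exists>j. pat j = y"
  unfolding pat_def using from_nat_into_surj[OF pats_countable[OF Dc D0]] by blast

definition tup :: "nat \<Rightarrow> nat" where "tup s = fst (prod_decode s)"
definition cls :: "nat \<Rightarrow> nat" where "cls s = fst (prod_decode (tup s))"
definition pj :: "nat \<Rightarrow> nat" where "pj s = fst (prod_decode (snd (prod_decode (tup s))))"
definition tt :: "nat \<Rightarrow> nat" where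
  "tt s = fst (prod_decode (snd (prod_decode (snd (prod_decode (tup s)))))) + 1"
definition qq :: "nat \<Rightarrow> nat" where
  "qq s = snd (prod_decode (snd (prod_decode (snd (prod_decode (tup s)))))) + 2"

lemma tuple_often:
  "\<exists>s\<ge>N. cls s = k \<and> pj s = j \<and> tt s = t + 1 \<and> qq s = q + 2"
proof -
  define s where "s = prod_encode (prod_encode (k, prod_encode (j, prod_encode (t, q))), N)"
  have "s \<ge> N" unfolding s_def by (rule le_prod_encode_2)
  moreover have "cls s = k \<and> pj s = j \<and> tt s = t + 1 \<and> qq s = q + 2"
    by (simp add: s_def cls_def pj_def tt_def qq_def tup_def)
  ultimately show ?thesis by blast
qed

definition yS :: "nat \<Rightarrow> nat \<Rightarrow> 'a" where "yS s = pat (pj s)"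
definition JS :: "nat \<Rightarrow> nat" where "JS s = PJ (yS s) + 1"
definition YS :: "nat \<Rightarrow> real" where "YS s = PY (yS s)"
definition dl :: "nat \<Rightarrow> real" where "dl s = 1 / real (qq s)"
definition eps :: "nat \<Rightarrow> real" where "eps s = 1 / real (tt s)"
definition lam :: "nat \<Rightarrow> real" where "lam s = eps s / 3"
definition Kc :: "nat \<Rightarrow> real" where "Kc s = (2 * YS s * (real (JS s) + 1)^2) powr p"

lemma yS_in: "yS s \<in> pats D" by (simp add: yS_def pat_in)
lemma yS_zero: "k \<ge> PJ (yS s) \<Longrightarrow> yS s k = 0" using PJ_zero[OF yS_in] .
lemma yS_zero': "k \<ge> JS s \<Longrightarrow> yS s k = 0" using yS_zero[of s k] by (simp add: JS_def)
lemma YS_ge: "norm (yS s k) \<le> YS s" unfolding YS_def by (rule PY_ge[OF yS_in])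
lemma YS_ge1: "YS s \<ge> 1" unfolding YS_def by (rule PY_ge1)
lemma JS_ge1: "JS s \<ge> 1" by (simp add: JS_def)
lemma dl_pos: "dl s > 0" by (simp add: dl_def qq_def)
lemma dl_le: "dl s \<le> 1/2" by (simp add: dl_def qq_def)
lemma eps_pos: "eps s > 0" by (simp add: eps_def tt_def)
lemma eps_le1: "eps s \<le> 1" by (simp add: eps_def tt_def)
lemma lam_pos: "lam s > 0" using eps_pos by (simp add: lam_def)
lemma Kc_pos: "Kc s > 0" using YS_ge1[of s] by (simp add: Kc_def)

definition LS :: "nat \<Rightarrow> nat" where
  "LS s = (LEAST L. L \<ge> JS s \<and> Kc s * tailf (dl s) L \<le> eps s)"

lemma LS_prop: "LS s \<ge> JS s \<and> Kc s * tailf (dl s) (LS s) \<le> eps s"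
proof -
  obtain N where N: "\<forall>L\<ge>N. tailf (dl s) L < eps s / Kc s"
    using tailf_small[OF dl_pos, of "eps s / Kc s" s] eps_pos Kc_pos by auto
  have "max N (JS s) \<ge> JS s \<and> Kc s * tailf (dl s) (max N (JS s)) \<le> eps s"
    using N[rule_format, of "max N (JS s)"] Kc_pos[of s] by (simp add: field_simps)
  then show ?thesis unfolding LS_def by (rule LeastI)
qed

lemma LS_ge: "LS s \<ge> JS s" using LS_prop by blast
lemma LS_ge1: "LS s \<ge> 1" using LS_ge JS_ge1 order_trans by blast
lemma LS_tail: "Kc s * tailf (dl s) (LS s) \<le> eps s" using LS_prop by blast

definition mu0 :: "nat \<Rightarrow> nat \<Rightarrow> nat \<Rightarrow> real" where
  "mu0 s e r = 1 + dl s + lam s * (\<Sum>i<r. 1 / real (i + e + 2))"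

lemma mu0_Suc: "mu0 s e (Suc r) = mu0 s e r + lam s / real (r + e + 2)"
  by (simp add: mu0_def algebra_simps)

lemma mu0_0: "mu0 s e 0 = 1 + dl s" by (simp add: mu0_def)

lemma mu0_ge: "mu0 s e r \<ge> 1 + dl s"
  unfolding mu0_def using lam_pos[of s] by (simp add: sum_nonneg)

lemma mu0_mono: "r \<le> r' \<Longrightarrow> mu0 s e r \<le> mu0 s e r'"
  unfolding mu0_def using lam_pos[of s]
  by (intro add_left_mono mult_left_mono sum_mono2) auto

definition Rs :: "nat \<Rightarrow> nat \<Rightarrow> nat" where
  "Rs s e = (LEAST R. mu0 s e R \<ge> real (qq s))"

lemma Rs_prop: "mu0 s e (Rs s e) \<ge> real (qq s)"
proof -
  obtain r where r: "(\<Sum>i<r. 1 / real (i + (e + 2))) > real (qq s) / lam s"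
    using harmonic_unbounded by blast
  then have "lam s * (\<Sum>i<r. 1 / real (i + (e + 2))) > real (qq s)"
    using lam_pos[of s] by (simp add: field_simps)
  then have "mu0 s e r \<ge> real (qq s)" unfolding mu0_def using dl_pos[of s]
    by (simp add: add.assoc)
  then show ?thesis unfolding Rs_def by (rule LeastI)
qed

lemma Rs_ge1: "Rs s e \<ge> 1"
proof (rule ccontr)
  assume "\<not> ?thesis"
  then have "Rs s e = 0" by simp
  then have "1 + dl s \<ge> real (qq s)" using Rs_prop[of s e] by (simp add: mu0_0)
  moreover have "real (qq s) \<ge> 2" by (simp add: qq_def)
  ultimately show False using dl_le[of s] by simp
qed

lemma Rs_min: "r < Rs s e \<Longrightarrow> mu0 s e r < real (qq s)"
  unfolding Rs_def using not_less_Least by (metis not_le)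

definition cndE :: "nat \<Rightarrow> nat \<Rightarrow> bool" where
  "cndE s e \<longleftrightarrow> 2^e \<ge> 8 * LS s \<and> Kc s * tailf (dl s) (2^e) \<le> (1/2)^s"

lemma cndE_ex: "\<exists>e\<ge>X. cndE s e"
proof -
  obtain N where N: "\<forall>L\<ge>N. tailf (dl s) L < (1/2)^s / Kc s"
    using tailf_small[OF dl_pos, of "(1/2)^s / Kc s" s] Kc_pos by auto
  define e where "e = max X (max N (8 * LS s))"
  have "e < 2^e" by (rule less_exp)
  then have "2^e \<ge> N" "2^e \<ge> 8 * LS s" unfolding e_def by linarith+
  then have "cndE s e" unfolding cndE_def using N[rule_format, of "2^e"] Kc_pos[of s]
    by (simp add: field_simps)
  then show ?thesis by (intro exI[of _ e]) (auto simp: e_def)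
qed

primrec E :: "nat \<Rightarrow> nat" where
  "E 0 = (LEAST e. e \<ge> 2 \<and> cndE 0 e)"
| "E (Suc s) = (LEAST e. e \<ge> E s + Rs s (E s) + s + 2 \<and> cndE (Suc s) e)"

abbreviation RR :: "nat \<Rightarrow> nat" where "RR s \<equiv> Rs s (E s)"

lemma E_prop: "cndE s (E s)" and E_Suc_ge: "E (Suc s) \<ge> E s + RR s + s + 2" and E0: "E 0 \<ge> 2"
proof -
  have a: "E 0 \<ge> 2 \<and> cndE 0 (E 0)"
    unfolding E.simps using cndE_ex[of 2 0] by (metis (mono_tags, lifting) LeastI)
  have b: "E (Suc s) \<ge> E s + RR s + s + 2 \<and> cndE (Suc s) (E (Suc s))" for s
    unfolding E.simps using cndE_ex[of "E s + RR s + s + 2" "Suc s"] by (metis (mono_tags, lifting) LeastI)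
  show "cndE s (E s)" using a b by (cases s) auto
  show "E (Suc s) \<ge> E s + RR s + s + 2" using b by blast
  show "E 0 \<ge> 2" using a by blast
qed

lemma E_mono: "s \<le> s' \<Longrightarrow> E s + RR s \<le> E s' \<or> s = s'"
proof (induction s' rule: dec_induct)
  case base then show ?case by simp
next
  case (step n)
  then show ?case using E_Suc_ge[of n] E_Suc_ge[of s] by auto
qed

lemma E_ge: "E s \<ge> s + 2"
proof (induction s)
  case 0 then show ?case using E0 by simp
next
  case (Suc s) then show ?case using E_Suc_ge[of s] by simp
qed

lemma E_strict: "s < s' \<Longrightarrow> E s + RR s + s + 2 \<le> E s'"
proof (induction s' rule: nat_less_induct)
  case (1 n)
  then obtain m where m: "n = Suc m" by (cases n) auto
  show ?case
  proof (cases "s = m")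
    case True then show ?thesis using E_Suc_ge[of m] m by simp
  next
    case False
    then have "s < m" using 1 m by simp
    then have "E s + RR s + s + 2 \<le> E m" using 1 m by simp
    then show ?thesis using E_Suc_ge[of m] m by simp
  qed
qed

definition bS :: "nat \<Rightarrow> nat \<Rightarrow> nat" where "bS s r = 2^(E s + r)"

definition inreg :: "nat \<Rightarrow> nat \<Rightarrow> nat \<Rightarrow> bool" where
  "inreg s r m \<longleftrightarrow> r < RR s \<and> bS s r \<le> m \<and> m < 2 * bS s r"

definition blk :: "nat \<Rightarrow> nat \<Rightarrow> nat \<Rightarrow> 'a" where
  "blk s r m = (let b = bS s r; i = (m - b) div LS s; k = (m - b) mod LS s; n = b + i * LS s in
     if k < JS s \<and> n + LS s \<le> 2 * b then yS s k / of_real (W (mu0 s (E s) r) k n) else 0)"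

definition sr :: "nat \<Rightarrow> nat \<times> nat" where "sr m = (SOME x. inreg (fst x) (snd x) m)"

definition u :: "nat \<Rightarrow> 'a" where
  "u m = (if \<exists>s r. inreg s r m then blk (fst (sr m)) (snd (sr m)) m else 0)"

definition kap :: "nat \<Rightarrow> nat" where
  "kap m = (if \<exists>s r. inreg s r m then cls (fst (sr m)) else 0)"

lemma bS_pos: "bS s r \<ge> 1" by (simp add: bS_def)

lemma bS_Suc: "bS s (Suc r) = 2 * bS s r" by (simp add: bS_def)

lemma bS_ge_L: "bS s r \<ge> 8 * LS s"
proof -
  have "8 * LS s \<le> 2^(E s)" using E_prop[of s] by (simp add: cndE_def)
  also have "(2::nat)^(E s) \<le> 2^(E s + r)" by (intro power_increasing) auto
  finally show ?thesis by (simp add: bS_def)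
qed

lemma inreg_sweep:
  assumes "inreg s r m"
  shows "2^(E s) \<le> m" "m < 2^(E s + RR s)"
proof -
  have "(2::nat)^(E s) \<le> 2^(E s + r)" by (intro power_increasing) auto
  moreover have "2^(E s + r) \<le> m" using assms unfolding inreg_def bS_def by blast
  ultimately show "2^(E s) \<le> m" by linarith
  have "m < 2^(E s + Suc r)" using assms by (simp add: inreg_def bS_def)
  also have "(2::nat)^(E s + Suc r) \<le> 2^(E s + RR s)" using assms by (intro power_increasing) (auto simp: inreg_def)
  finally show "m < 2^(E s + RR s)" .
qed

lemma inreg_uniq:
  assumes "inreg s r m" "inreg s' r' m"
  shows "s = s' \<and> r = r'"
proof -
  have ss: "s = s'"
  proof (rule ccontr)
    assume "s \<noteq> s'"
    then consider "s < s'" | "s' < s" by linarith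
    then show False
    proof cases
      case 1
      then have "E s + RR s \<le> E s'" using E_strict[of s s'] by simp
      then have "(2::nat)^(E s + RR s) \<le> 2^(E s')" by (intro power_increasing) auto
      then show False using inreg_sweep[OF assms(1)] inreg_sweep[OF assms(2)] by linarith
    next
      case 2
      then have "E s' + RR s' \<le> E s" using E_strict[of s' s] by simp
      then have "(2::nat)^(E s' + RR s') \<le> 2^(E s)" by (intro power_increasing) auto
      then show False using inreg_sweep[OF assms(1)] inreg_sweep[OF assms(2)] by linarith
    qed
  qed
  moreover have "r = r'"
  proof (rule ccontr)
    assume "r \<noteq> r'"
    then consider "r < r'" | "r' < r" by linarith
    then show False
    proof cases
      case 1
      then have "(2::nat)^(E s + Suc r) \<le> 2^(E s + r')" by (intro power_increasing) auto
      then show False using assms ss by (simp add: inreg_def bS_def)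
    next
      case 2
      then have "(2::nat)^(E s + Suc r') \<le> 2^(E s + r)" by (intro power_increasing) auto
      then show False using assms ss by (simp add: inreg_def bS_def)
    qed
  qed
  ultimately show ?thesis by simp
qed

lemma u_reg:
  assumes "inreg s r m"
  shows "u m = blk s r m" "kap m = cls s"
proof -
  have ex: "\<exists>x. inreg (fst x) (snd x) m" using assms by (intro exI[of _ "(s,r)"]) simp
  have "inreg (fst (sr m)) (snd (sr m)) m" unfolding sr_def by (rule someI_ex[OF ex])
  then have "fst (sr m) = s" "snd (sr m) = r" using inreg_uniq[OF assms] by blast+
  then show "u m = blk s r m" "kap m = cls s" using assms by (auto simp: u_def kap_def)
qed

lemma u_out: "(\<And>s r. \<not> inreg s r m) \<Longrightarrow> u m = 0"
  by (simp add: u_def)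

lemma blk_nz:
  assumes "blk s r m \<noteq> 0" "inreg s r m"
  obtains i k where "m = bS s r + i * LS s + k" "k < JS s" "bS s r + i * LS s + LS s \<le> 2 * bS s r"
    "blk s r m = yS s k / of_real (W (mu0 s (E s) r) k (bS s r + i * LS s))"
proof -
  define b where "b = bS s r"
  define i where "i = (m - b) div LS s"
  define k where "k = (m - b) mod LS s"
  have mb: "m \<ge> b" using assms(2) by (simp add: inreg_def b_def)
  have dm: "m - b = i * LS s + k" unfolding i_def k_def by simp
  have c: "k < JS s \<and> b + i * LS s + LS s \<le> 2 * b"
    using assms(1) unfolding blk_def Let_def b_def[symmetric] i_def[symmetric] k_def[symmetric]
    by (auto split: if_splits)
  have v: "blk s r m = yS s k / of_real (W (mu0 s (E s) r) k (b + i * LS s))"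
    using c unfolding blk_def Let_def b_def[symmetric] i_def[symmetric] k_def[symmetric] by simp
  have mf: "m = b + i * LS s + k" using dm mb by simp
  show ?thesis by (rule that[of i k]) (use mf c v in \<open>simp_all add: b_def\<close>)
qed

lemma copy_val:
  assumes "r < RR s" "n = bS s r + i * LS s" "n + LS s \<le> 2 * bS s r" "k < JS s"
  shows "inreg s r (n + k)" "u (n + k) = yS s k / of_real (W (mu0 s (E s) r) k n)" "kap (n + k) = cls s"
proof -
  have kL: "k < LS s" using assms(4) LS_ge[of s] by simp
  show ir: "inreg s r (n + k)" using assms kL by (simp add: inreg_def)
  have d: "(n + k - bS s r) div LS s = i" "(n + k - bS s r) mod LS s = k"
    using assms(2) kL by simp_all
  show "u (n + k) = yS s k / of_real (W (mu0 s (E s) r) k n)"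
    unfolding u_reg(1)[OF ir] blk_def Let_def d using assms by simp
  show "kap (n + k) = cls s" by (rule u_reg(2)[OF ir])
qed

lemma powr_le_self: "0 \<le> X \<Longrightarrow> X \<le> 1 \<Longrightarrow> X powr p \<le> X"
  using powr_mono'[of 1 p X] p1 by (cases "X = 0") auto

lemma u_bound:
  assumes "inreg s r m"
  shows "norm (u m) powr p \<le> Kc s * real (m + 1) powr (-(1 + dl s))"
proof (cases "u m = 0")
  case True then show ?thesis using Kc_pos[of s] p0 by simp
next
  case False
  then have bnz: "blk s r m \<noteq> 0" using u_reg(1)[OF assms] by simp
  obtain i k where ik: "m = bS s r + i * LS s + k" "k < JS s"
    "blk s r m = yS s k / of_real (W (mu0 s (E s) r) k (bS s r + i * LS s))"
    using blk_nz[OF bnz assms] by metis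
  define n where "n = bS s r + i * LS s"
  define \<delta> where "\<delta> = dl s"
  define A where "A = 2 * YS s * (real (JS s) + 1)^2"
  define X where "X = real (m + 1) powr (-(1 + \<delta>))"
  have d0: "0 \<le> \<delta>" "\<delta> \<le> 1" using dl_pos[of s] dl_le[of s] by (simp_all add: \<delta>_def)
  have Wl: "(real (k + n + 1) / real (k + 2)) powr (1 + \<delta>) \<le> W (mu0 s (E s) r) k n"
    unfolding W_def using prod_lower[OF d0, of "mu0 s (E s) r" k "k + n"] mu0_ge[of s "E s" r]
    by (simp add: \<delta>_def add.commute)
  have Wp: "W (mu0 s (E s) r) k n > 0" using W_pos mu0_ge[of s "E s" r] dl_pos[of s] by simp
  have mkn: "m + 1 = k + n + 1" using ik by (simp add: n_def)
  have "norm (u m) = norm (yS s k) / W (mu0 s (E s) r) k n"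
    using u_reg(1)[OF assms] ik(3) Wp by (simp add: n_def norm_divide)
  also have "\<dots> \<le> YS s / (real (m + 1) / real (k + 2)) powr (1 + \<delta>)"
    using Wl Wp YS_ge[of s k] mkn by (intro frac_le) (auto simp: YS_ge1 order_trans[OF _ YS_ge1])
  also have "\<dots> = YS s * real (k + 2) powr (1 + \<delta>) * X"
  proof -
    have e1: "(real (m+1) / real (k+2)) powr (1+\<delta>) = real (m+1) powr (1+\<delta>) / real (k+2) powr (1+\<delta>)"
      by (rule powr_divide; simp)
    have e2: "X = 1 / real (m+1) powr (1+\<delta>)" unfolding X_def by (rule powr_minus_divide)
    show ?thesis unfolding e1 e2 by (simp add: field_simps)
  qed
  also have "\<dots> \<le> YS s * (real (JS s) + 1)^2 * X"
  proof -
    have "real (k + 2) powr (1 + \<delta>) \<le> (real (JS s) + 1) powr (1 + \<delta>)"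
      using ik(2) d0 by (intro powr_mono2) auto
    also have "\<dots> \<le> (real (JS s) + 1) powr 2" using d0 by (intro powr_mono) auto
    also have "\<dots> = (real (JS s) + 1)^2" by (simp add: powr_realpow)
    finally show ?thesis using YS_ge1[of s] by (intro mult_right_mono mult_left_mono) (auto simp: X_def)
  qed
  also have "\<dots> \<le> A * X" unfolding A_def using YS_ge1[of s]
    by (intro mult_right_mono) (auto simp: X_def)
  finally have nb: "norm (u m) \<le> A * X" .
  have g1: "real (m+1) powr (1+\<delta>) \<ge> 1" by (rule ge_one_powr_ge_zero) (use d0 in auto)
  have X01: "0 \<le> X" "X \<le> 1" unfolding X_def powr_minus_divide using g1 by auto
  have "norm (u m) powr p \<le> (A * X) powr p" using nb p0 by (intro powr_mono2) auto
  also have "\<dots> = A powr p * X powr p" using X01 YS_ge1[of s] by (simp add: A_def powr_mult)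
  also have "\<dots> \<le> A powr p * X" by (intro mult_left_mono powr_le_self X01) auto
  finally show ?thesis by (simp add: A_def Kc_def X_def \<delta>_def)
qed

lemma u_lp: "u \<in> lp p"
proof (rule lpI, rule summableI_nonneg_bounded[where x = 2])
  fix N
  define h where "h s m = (if 2^(E s) \<le> m then Kc s * real (m + 1) powr (-(1 + dl s)) else 0)" for s m
  have h0: "h s m \<ge> 0" for s m using Kc_pos[of s] by (simp add: h_def)
  have fm: "norm (u m) powr p \<le> (\<Sum>s<N. h s m)" if "m < N" for m
  proof (cases "\<exists>s r. inreg s r m")
    case True
    then obtain s r where sr: "inreg s r m" by blast
    have "s < 2^(E s)" using E_ge[of s] less_exp[of "E s"] by linarith
    then have sN: "s < N" using inreg_sweep(1)[OF sr] that by simp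
    have "norm (u m) powr p \<le> h s m" using u_bound[OF sr] inreg_sweep(1)[OF sr] by (simp add: h_def)
    also have "\<dots> \<le> (\<Sum>s<N. h s m)" using sN h0 by (intro member_le_sum) auto
    finally show ?thesis .
  next
    case False then show ?thesis using u_out[of m] p0 h0 by (simp add: sum_nonneg)
  qed
  have "(\<Sum>m<N. norm (u m) powr p) \<le> (\<Sum>m<N. \<Sum>s<N. h s m)" using fm by (intro sum_mono) auto
  also have "\<dots> = (\<Sum>s<N. \<Sum>m<N. h s m)" by (rule sum.swap)
  also have "\<dots> \<le> (\<Sum>s<N. (1/2)^s)"
  proof (rule sum_mono)
    fix s assume "s \<in> {..<N}"
    have "(\<Sum>m<N. h s m) = (\<Sum>m\<in>{2^(E s)..<N}. Kc s * real (m + 1) powr (-(1 + dl s)))"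
      unfolding h_def by (rule sum.mono_neutral_cong_right) auto
    also have "\<dots> = Kc s * (\<Sum>m\<in>{2^(E s)..<N}. real (m + 1) powr (-(1 + dl s)))" by (simp add: sum_distrib_left)
    also have "\<dots> \<le> Kc s * tailf (dl s) (2^(E s))"
      using Kc_pos[of s] by (intro mult_left_mono partial_le_tailf dl_pos) auto
    also have "\<dots> \<le> (1/2)^s" using E_prop[of s] by (simp add: cndE_def)
    finally show "(\<Sum>m<N. h s m) \<le> (1/2)^s" .
  qed
  also have "\<dots> \<le> 2"
  proof -
    have "(\<Sum>s<N. (1/2::real)^s) = (1 - (1/2)^N) / (1 - 1/2)" using sum_gp_strict[of "1/2::real" N] by simp
    also have "\<dots> \<le> 2" by simp
    finally show ?thesis .
  qed
  finally show "(\<Sum>m<N. norm (u m) powr p) \<le> 2" .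
qed auto

end

lemma lower_density_zero:
  assumes "\<And>\<epsilon> N0. \<epsilon> > 0 \<Longrightarrow> \<exists>N\<ge>N0. real (card (A \<inter> {0..N})) / real (N + 1) < \<epsilon>"
  shows "\<not> lower_density A > 0"
proof
  assume pos: "lower_density A > 0"
  obtain \<epsilon> where e: "0 < ereal \<epsilon>" "ereal \<epsilon> < lower_density A" using ereal_dense2[OF pos] by blast
  then have "eventually (\<lambda>N. ereal (real (card (A \<inter> {0..N})) / real (N + 1)) > ereal \<epsilon>) sequentially"
    unfolding lower_density_def by (intro less_LiminfD) auto
  then obtain N0 where N0: "\<And>N. N \<ge> N0 \<Longrightarrow> real (card (A \<inter> {0..N})) / real (N + 1) > \<epsilon>"
    by (auto simp: eventually_sequentially)
  obtain N where "N \<ge> N0" "real (card (A \<inter> {0..N})) / real (N + 1) < \<epsilon>" using assms[of \<epsilon> N0] e by auto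
  then show False using N0[of N] by simp
qed

lemma upper_density_pos:
  assumes "\<delta> > 0" "\<And>N0. \<exists>N\<ge>N0. real (card (A \<inter> {0..N})) / real (N + 1) \<ge> \<delta>"
  shows "upper_density A > 0"
proof -
  have "ereal \<delta> \<le> upper_density A"
  proof (rule ccontr)
    assume "\<not> ?thesis"
    then have "upper_density A < ereal \<delta>" by simp
    then have "eventually (\<lambda>N. ereal (real (card (A \<inter> {0..N})) / real (N + 1)) < ereal \<delta>) sequentially"
      unfolding upper_density_def by (rule Limsup_lessD)
    then obtain N0 where N0: "\<And>N. N \<ge> N0 \<Longrightarrow> real (card (A \<inter> {0..N})) / real (N + 1) < \<delta>"
      by (auto simp: eventually_sequentially)
    obtain N where "N \<ge> N0" "real (card (A \<inter> {0..N})) / real (N + 1) \<ge> \<delta>" using assms(2)[of N0] by auto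
    then show False using N0[of N] by simp
  qed
  then show ?thesis using assms(1) by (metis ereal_less(2) order_less_le_trans)
qed

context constr
begin

definition MM :: "(nat \<Rightarrow> 'a) set" where
  "MM = {z \<in> lp p. \<exists>c. \<forall>m. z m = c (kap m) * u m}"

lemma MM_sub: "MM \<subseteq> lp p" by (auto simp: MM_def)

lemma MM_subspace: "seq_subspace MM"
  unfolding seq_subspace_def
proof (intro conjI ballI allI)
  show "(\<lambda>n. 0) \<in> MM" unfolding MM_def using lp_zero[OF p0] by (auto intro!: exI[of _ "\<lambda>_. 0"])
next
  fix x y assume x: "x \<in> MM" and y: "y \<in> MM"
  then obtain c1 c2 where c1: "\<forall>m. x m = c1 (kap m) * u m" and c2: "\<forall>m. y m = c2 (kap m) * u m"
    by (auto simp: MM_def)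
  have "(\<lambda>n. x n + y n) \<in> lp p" using x y p0 by (intro lp_add) (auto simp: MM_def)
  moreover have "\<forall>m. x m + y m = (\<lambda>k. c1 k + c2 k) (kap m) * u m" using c1 c2 by (simp add: algebra_simps)
  ultimately show "(\<lambda>n. x n + y n) \<in> MM" unfolding MM_def by (auto intro!: exI[of _ "\<lambda>k. c1 k + c2 k"])
next
  fix a x assume x: "x \<in> MM"
  then obtain c1 where c1: "\<forall>m. x m = c1 (kap m) * u m" by (auto simp: MM_def)
  have xl: "x \<in> lp p" using x MM_sub by auto
  show "(\<lambda>n. a * x n) \<in> MM" unfolding MM_def mem_Collect_eq
  proof (intro conjI exI[of _ "\<lambda>k. a * c1 k"])
    show "(\<lambda>n. a * x n) \<in> lp p" by (rule lp_scale(1)[OF xl])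
    show "\<forall>m. a * x m = a * c1 (kap m) * u m" using c1 by (simp add: algebra_simps)
  qed
qed

lemma MM_char:
  assumes "z \<in> lp p" "z \<notin> MM"
  shows "(\<exists>m. u m = 0 \<and> z m \<noteq> 0) \<or>
    (\<exists>m1 m2. kap m1 = kap m2 \<and> u m1 \<noteq> 0 \<and> u m2 \<noteq> 0 \<and> z m1 * u m2 \<noteq> z m2 * u m1)"
proof (rule ccontr)
  assume "\<not> ?thesis"
  then have h1: "\<And>m. u m = 0 \<Longrightarrow> z m = 0"
    and h2: "\<And>m1 m2. kap m1 = kap m2 \<Longrightarrow> u m1 \<noteq> 0 \<Longrightarrow> u m2 \<noteq> 0 \<Longrightarrow> z m1 * u m2 = z m2 * u m1"
    by auto
  define c where "c k = (if \<exists>m. kap m = k \<and> u m \<noteq> 0 then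
      z (SOME m. kap m = k \<and> u m \<noteq> 0) / u (SOME m. kap m = k \<and> u m \<noteq> 0) else 0)" for k
  have "z m = c (kap m) * u m" for m
  proof (cases "u m = 0")
    case True then show ?thesis using h1 by simp
  next
    case False
    then have ex: "\<exists>m'. kap m' = kap m \<and> u m' \<noteq> 0" by blast
    define m0 where "m0 = (SOME m'. kap m' = kap m \<and> u m' \<noteq> 0)"
    have m0: "kap m0 = kap m" "u m0 \<noteq> 0" using someI_ex[OF ex] unfolding m0_def by blast+
    have "z m * u m0 = z m0 * u m" using h2[of m m0] m0 False by simp
    then have "z m = z m0 / u m0 * u m" using m0(2) by (simp add: field_simps)
    then show ?thesis unfolding c_def m0_def[symmetric] using ex by simp
  qed
  then have "z \<in> MM" using assms(1) unfolding MM_def by blast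
  then show False using assms(2) by simp
qed

lemma coord_diff_le:
  assumes "y \<in> lp p" "z \<in> lp p"
  shows "norm (y m - z m) \<le> lp_norm p (\<lambda>n. y n - z n)"
  using coord_le_norm[OF lp_diff[OF assms] p0] p0 by simp

lemma MM_closed: "lp_closed p MM"
  unfolding lp_closed_def lp_open_def
proof (intro conjI MM_sub ballI)
  show "lp p - MM \<subseteq> lp p" by blast
next
  fix z assume z: "z \<in> lp p - MM"
  then have zl: "z \<in> lp p" and zM: "z \<notin> MM" by auto
  from MM_char[OF zl zM] show "\<exists>e>0. \<forall>y\<in>lp p. lp_norm p (\<lambda>n. y n - z n) < e \<longrightarrow> y \<in> lp p - MM"
  proof
    assume "\<exists>m. u m = 0 \<and> z m \<noteq> 0"
    then obtain m where m: "u m = 0" "z m \<noteq> 0" by blast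
    show ?thesis
    proof (intro exI[of _ "norm (z m)"] conjI ballI impI)
      show "norm (z m) > 0" using m by simp
      fix y assume y: "y \<in> lp p" "lp_norm p (\<lambda>n. y n - z n) < norm (z m)"
      then have "norm (y m - z m) < norm (z m)" using coord_diff_le[OF y(1) zl, of m] by simp
      then have "y m \<noteq> 0" by auto
      have "y \<notin> MM"
      proof
        assume "y \<in> MM"
        then obtain c where "\<forall>m. y m = c (kap m) * u m" by (auto simp: MM_def)
        then show False using m(1) \<open>y m \<noteq> 0\<close> by (metis mult_zero_right)
      qed
      then show "y \<in> lp p - MM" using y by simp
    qed
  next
    assume "\<exists>m1 m2. kap m1 = kap m2 \<and> u m1 \<noteq> 0 \<and> u m2 \<noteq> 0 \<and> z m1 * u m2 \<noteq> z m2 * u m1"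
    then obtain m1 m2 where m: "kap m1 = kap m2" "u m1 \<noteq> 0" "u m2 \<noteq> 0" "z m1 * u m2 \<noteq> z m2 * u m1" by blast
    define d where "d = z m1 * u m2 - z m2 * u m1"
    define K where "K = norm (u m1) + norm (u m2)"
    have d0: "norm d > 0" using m(4) by (simp add: d_def)
    have K0: "K > 0" using m(2) by (simp add: K_def add_pos_nonneg)
    show ?thesis
    proof (intro exI[of _ "norm d / K"] conjI ballI impI)
      show "norm d / K > 0" using d0 K0 by simp
      fix y assume y: "y \<in> lp p" "lp_norm p (\<lambda>n. y n - z n) < norm d / K"
      have e1: "norm (y m1 - z m1) < norm d / K" using coord_diff_le[OF y(1) zl, of m1] y(2) by simp
      have e2: "norm (y m2 - z m2) < norm d / K" using coord_diff_le[OF y(1) zl, of m2] y(2) by simp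
      have eq: "y m1 * u m2 - y m2 * u m1 = d + ((y m1 - z m1) * u m2 - (y m2 - z m2) * u m1)"
        by (simp add: d_def algebra_simps)
      have "norm ((y m1 - z m1) * u m2 - (y m2 - z m2) * u m1) \<le> norm (y m1 - z m1) * norm (u m2) + norm (y m2 - z m2) * norm (u m1)"
        by (metis norm_mult norm_triangle_ineq4)
      also have "\<dots> < norm d / K * norm (u m2) + norm d / K * norm (u m1)"
      proof -
        have a: "norm (y m1 - z m1) * norm (u m2) \<le> norm d / K * norm (u m2)"
          using e1 by (intro mult_right_mono) auto
        have b: "norm (y m2 - z m2) * norm (u m1) < norm d / K * norm (u m1)"
          using e2 m(2) by (intro mult_strict_right_mono) auto
        show ?thesis using a b by simp
      qed
      also have "\<dots> = norm d / K * K" by (simp only: K_def distrib_left add.commute)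
      also have "\<dots> = norm d" using K0 by simp
      finally have "norm ((y m1 - z m1) * u m2 - (y m2 - z m2) * u m1) < norm d" .
      then have ne: "y m1 * u m2 - y m2 * u m1 \<noteq> 0" unfolding eq
        by (metis add.right_neutral add_diff_cancel_left' diff_add_cancel norm_minus_commute
            order_less_irrefl diff_0)
      have "y \<notin> MM"
      proof
        assume "y \<in> MM"
        then obtain c where c: "\<forall>m. y m = c (kap m) * u m" by (auto simp: MM_def)
        then have "y m1 * u m2 - y m2 * u m1 = 0" using m(1) by (simp add: algebra_simps)
        then show False using ne by simp
      qed
      then show "y \<in> lp p - MM" using y by simp
    qed
  qed
qed

lemma class_witness: "\<exists>m. kap m = i \<and> u m \<noteq> 0"
proof -
  define y0 :: "nat \<Rightarrow> 'a" where "y0 = (\<lambda>k. if k = 0 then 1 else 0)"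
  have "y0 \<in> pats D" unfolding pats_def y0_def using D0 D1 by (auto intro!: exI[of _ 1])
  then obtain j where j: "pat j = y0" using pat_surj by blast
  obtain s where s: "cls s = i" "pj s = j" using tuple_often[of 0 i j 0 0] by blast
  have r0: "0 < RR s" using Rs_ge1[of s "E s"] by simp
  have nb: "bS s 0 + 0 * LS s + LS s \<le> 2 * bS s 0" using bS_ge_L[of s 0] by simp
  have k0: "0 < JS s" using JS_ge1[of s] by simp
  have cv: "u (bS s 0 + 0) = yS s 0 / of_real (W (mu0 s (E s) 0) 0 (bS s 0))" "kap (bS s 0 + 0) = cls s"
    using copy_val[OF r0 _ _ k0, of "bS s 0" 0] nb by auto
  have "yS s 0 = 1" using j s by (simp add: yS_def y0_def)
  moreover have "W (mu0 s (E s) 0) 0 (bS s 0) > 0" using W_pos mu0_ge[of s "E s" 0] dl_pos[of s] by simp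
  ultimately have "u (bS s 0) \<noteq> 0" using cv by simp
  then show ?thesis using cv s by (intro exI[of _ "bS s 0"]) simp
qed

lemma MM_infdim: "infinite_dim MM"
  unfolding infinite_dim_def
proof
  fix k
  define v where "v i m = (if kap m = i then u m else 0)" for i m
  have vM: "v i \<in> MM" for i
  proof -
    have "v i \<in> lp p"
    proof (rule lpI, rule summable_comparison_test[OF _ lp_summable[OF u_lp]])
      show "\<exists>N. \<forall>n\<ge>N. norm (norm (v i n) powr p) \<le> norm (u n) powr p"
        using p0 by (auto simp: v_def)
    qed
    moreover have "\<forall>m. v i m = (\<lambda>k. if k = i then 1 else 0) (kap m) * u m" by (simp add: v_def)
    ultimately show ?thesis unfolding MM_def by (auto intro!: exI[of _ "\<lambda>k. if k = i then 1 else 0"])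
  qed
  have "seq_lin_indep k v"
    unfolding seq_lin_indep_def
  proof (intro allI impI)
    fix c i assume h: "(\<lambda>n. \<Sum>i<k. c i * v i n) = (\<lambda>n. 0)" and ik: "i < k"
    obtain m where m: "kap m = i" "u m \<noteq> 0" using class_witness by blast
    have "(\<Sum>i'<k. c i' * v i' m) = 0" using h by (metis)
    moreover have "(\<Sum>i'<k. c i' * v i' m) = c i * u m"
    proof -
      have "(\<Sum>i'<k. c i' * v i' m) = (\<Sum>i'\<in>{i}. c i' * v i' m)"
        by (rule sum.mono_neutral_right) (use ik m in \<open>auto simp: v_def\<close>)
      then show ?thesis using m by (simp add: v_def)
    qed
    ultimately show "c i = 0" using m by simp
  qed
  then show "\<exists>v. (\<forall>i<k. v i \<in> MM) \<and> seq_lin_indep k v" using vM by blast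
qed

end

lemma prod_split_ivl:
  assumes "a \<le> b" "b \<le> c"
  shows "(\<Prod>i\<in>{Suc a..c}. f i) = (\<Prod>i\<in>{Suc a..b}. f i) * (\<Prod>i\<in>{Suc b..c}. f i)"
proof -
  have "{Suc a..c} = {Suc a..b} \<union> {Suc b..c}" using assms by auto
  moreover have "{Suc a..b} \<inter> {Suc b..c} = {}" by auto
  ultimately show ?thesis by (simp add: prod.union_disjoint)
qed

lemma pow2_powr: "a > 0 \<Longrightarrow> real ((2::nat)^a) powr (l / real a) = 2 powr l"
proof -
  assume a: "a > 0"
  have "real ((2::nat)^a) = 2 powr (real a)" by (simp add: powr_realpow)
  then have "real ((2::nat)^a) powr (l / real a) = 2 powr (real a * (l / real a))"
    by (simp add: powr_powr)
  also have "real a * (l / real a) = l" using a by simp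
  finally show ?thesis .
qed

context constr
begin

lemma W_ratio_eps:
  assumes m0: "0 \<le> \<mu>0" "\<mu>0 \<le> \<mu>" and m1: "\<mu> \<le> \<mu>0 + lam s / real (r + E s + 2)"
    and kn: "k + n \<le> 2^(E s + r + 2)" "1 \<le> k + n"
  shows "W \<mu> k n \<le> (1 + eps s) * W \<mu>0 k n"
proof -
  define \<eta> where "\<eta> = lam s / real (r + E s + 2)"
  have \<eta>0: "\<eta> \<ge> 0" using lam_pos[of s] by (simp add: \<eta>_def)
  have W0: "W \<mu>0 k n > 0" using W_pos m0 by simp
  have "W \<mu> k n \<le> W \<mu>0 k n * (\<Prod>i\<in>{Suc k..k+n}. 1 + (\<mu> - \<mu>0) / real i)" by (rule W_ratio[OF m0])
  also have "(\<Prod>i\<in>{Suc k..k+n}. 1 + (\<mu> - \<mu>0) / real i) \<le> (\<Prod>i\<in>{Suc k..k+n}. 1 + \<eta> / real i)"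
  proof (rule prod_mono)
    fix i assume "i \<in> {Suc k..k+n}"
    have mm: "\<mu> - \<mu>0 \<le> \<eta>" using m1 by (simp add: \<eta>_def)
    have "(\<mu> - \<mu>0) / real i \<le> \<eta> / real i" by (rule divide_right_mono[OF mm]) simp
    then show "0 \<le> 1 + (\<mu> - \<mu>0) / real i \<and> 1 + (\<mu> - \<mu>0) / real i \<le> 1 + \<eta> / real i"
      using m0 by simp
  qed
  also have "\<dots> \<le> (1 + \<eta>) * real (k + n) powr \<eta>" by (rule prod_upper0[OF \<eta>0]) (use kn in auto)
  also have "real (k + n) powr \<eta> \<le> real ((2::nat)^(E s + r + 2)) powr \<eta>"
    using kn \<eta>0 by (intro powr_mono2) (auto simp del: of_nat_power)
  also have "real ((2::nat)^(E s + r + 2)) powr \<eta> = 2 powr (lam s)"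
  proof -
    have e: "r + E s + 2 = E s + r + 2" by simp
    show ?thesis unfolding \<eta>_def e by (rule pow2_powr) simp
  qed
  also have "2 powr (lam s) \<le> 1 + lam s * 1"
    using bern_powr[of "lam s" 1] lam_pos[of s] eps_le1[of s] by (simp add: lam_def)
  also have "(1 + \<eta>) \<le> 1 + lam s"
    using lam_pos[of s] by (auto simp: \<eta>_def divide_le_eq)
  finally have "W \<mu> k n \<le> W \<mu>0 k n * ((1 + lam s) * (1 + lam s))"
    using W0 \<eta>0 lam_pos[of s] by (auto elim!: order_trans intro!: mult_left_mono mult_right_mono)
  also have "(1 + lam s) * (1 + lam s) \<le> 1 + eps s"
  proof -
    have "lam s * lam s \<le> lam s" using lam_pos[of s] eps_le1[of s] by (simp add: lam_def mult_le_cancel_left1)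
    then show ?thesis by (simp add: lam_def algebra_simps)
  qed
  finally show ?thesis using W0 by (simp add: mult.commute mult_left_mono)
qed

lemma loc:
  assumes "inreg s' r' m" "r < RR s" "bS s r \<le> m" "m < 4 * bS s r"
  shows "s' = s \<and> (r' = r \<or> r' = Suc r)"
proof -
  have m4: "m < 2^(E s + r + 2)" using assms(4) by (simp add: bS_def power_add)
  have mb: "2^(E s + r) \<le> m" using assms(3) by (simp add: bS_def)
  have sw: "2^(E s') \<le> m" "m < 2^(E s' + RR s')" using inreg_sweep[OF assms(1)] by auto
  have ss: "s' = s"
  proof (rule ccontr)
    assume "s' \<noteq> s"
    then consider "s' < s" | "s < s'" by linarith
    then show False
    proof cases
      case 1
      then have "E s' + RR s' \<le> E s + r" using E_strict[of s' s] by simp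
      then have "(2::nat)^(E s' + RR s') \<le> 2^(E s + r)" by (intro power_increasing) auto
      then show False using sw mb by linarith
    next
      case 2
      then have "E s + r + 2 \<le> E s'" using E_strict[of s s'] assms(2) by simp
      then have "(2::nat)^(E s + r + 2) \<le> 2^(E s')" by (intro power_increasing) auto
      then show False using sw m4 by linarith
    qed
  qed
  have ir: "2^(E s + r') \<le> m" "m < 2^(E s + r' + 1)"
    using assms(1) ss by (auto simp: inreg_def bS_def)
  have "r' = r \<or> r' = Suc r"
  proof (rule ccontr)
    assume "\<not> ?thesis"
    then consider "r' < r" | "r + 2 \<le> r'" by linarith
    then show False
    proof cases
      case 1
      then have "(2::nat)^(E s + r' + 1) \<le> 2^(E s + r)" by (intro power_increasing) auto
      then show False using ir mb by linarith
    next
      case 2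
      then have "(2::nat)^(E s + r + 2) \<le> 2^(E s + r')" by (intro power_increasing) auto
      then show False using ir m4 by linarith
    qed
  qed
  then show ?thesis using ss by blast
qed

lemma decay_bound:
  assumes "k' < JS s" "k' \<le> k"
  shows "YS s / (real (k+1) / real (k'+2)) powr (1 + dl s) \<le> YS s * (real (JS s) + 1)^2 * real (k+1) powr (-(1 + dl s))"
proof -
  define \<delta> where "\<delta> = dl s"
  have d0: "0 \<le> \<delta>" "\<delta> \<le> 1" using dl_pos[of s] dl_le[of s] by (simp_all add: \<delta>_def)
  have e1: "(real (k+1) / real (k'+2)) powr (1+\<delta>) = real (k+1) powr (1+\<delta>) / real (k'+2) powr (1+\<delta>)"
    by (rule powr_divide; simp)
  have e2: "real (k+1) powr (-(1+\<delta>)) = 1 / real (k+1) powr (1+\<delta>)" by (rule powr_minus_divide)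
  have "YS s / (real (k+1) / real (k'+2)) powr (1 + \<delta>) = YS s * real (k'+2) powr (1+\<delta>) * real (k+1) powr (-(1+\<delta>))"
    unfolding e1 e2 by (simp add: field_simps)
  also have "\<dots> \<le> YS s * (real (JS s) + 1)^2 * real (k+1) powr (-(1+\<delta>))"
  proof -
    have "real (k'+2) powr (1 + \<delta>) \<le> (real (JS s) + 1) powr (1 + \<delta>)"
      using assms(1) d0 by (intro powr_mono2) auto
    also have "\<dots> \<le> (real (JS s) + 1) powr 2" using d0 by (intro powr_mono) auto
    also have "\<dots> = (real (JS s) + 1)^2" by (simp add: powr_realpow)
    finally show ?thesis using YS_ge1[of s] by (intro mult_right_mono mult_left_mono) auto
  qed
  finally show ?thesis by (simp add: \<delta>_def)
qed

lemma powr_final: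
  assumes "nv \<le> Nc * A * X" "0 \<le> nv" "0 \<le> Nc" "1 \<le> A" "0 \<le> X" "X \<le> 1"
  shows "nv powr p \<le> Nc powr p * (A powr p * X)"
proof -
  have "nv powr p \<le> (Nc * A * X) powr p" using assms p0 by (intro powr_mono2) auto
  also have "\<dots> = Nc powr p * A powr p * X powr p" using assms by (simp add: powr_mult)
  also have "\<dots> \<le> Nc powr p * A powr p * X" using assms by (intro mult_left_mono powr_le_self) auto
  finally show ?thesis by (simp add: mult.assoc)
qed

lemma X_le1: "0 \<le> real (k+1) powr (-(1 + dl s))" "real (k+1) powr (-(1 + dl s)) \<le> 1"
proof -
  have g1: "real (k+1) powr (1 + dl s) \<ge> 1" by (rule ge_one_powr_ge_zero) (use dl_pos[of s] in auto)
  show "0 \<le> real (k+1) powr (-(1 + dl s))" by simp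
  show "real (k+1) powr (-(1 + dl s)) \<le> 1" unfolding powr_minus_divide using g1 by auto
qed

lemma near:
  assumes zc: "\<forall>m. z m = c (kap m) * u m" and r: "r < RR s"
    and mu: "mu0 s (E s) r \<le> \<mu>" "\<mu> \<le> mu0 s (E s) (Suc r)"
    and n: "n = bS s r + i * LS s" "n + LS s \<le> 2 * bS s r" and k: "k < JS s"
  shows "norm ((bws \<mu> ^^ n) z k - c (cls s) * yS s k) \<le> norm (c (cls s)) * YS s * eps s"
proof -
  define \<mu>0 where "\<mu>0 = mu0 s (E s) r"
  define C where "C = c (cls s)"
  have cv: "u (n + k) = yS s k / of_real (W \<mu>0 k n)" "kap (n + k) = cls s"
    using copy_val[OF r n k] by (auto simp: \<mu>0_def)
  have m00: "0 \<le> \<mu>0" using mu0_ge[of s "E s" r] dl_pos[of s] by (simp add: \<mu>0_def)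
  have W0: "W \<mu>0 k n > 0" using W_pos[OF m00] by simp
  have Wl: "W \<mu>0 k n \<le> W \<mu> k n" using W_mono[OF m00] mu by (simp add: \<mu>0_def)
  have b1: "bS s r \<ge> 1" by (rule bS_pos)
  have kL: "k < LS s" using k LS_ge[of s] by simp
  have Wu: "W \<mu> k n \<le> (1 + eps s) * W \<mu>0 k n"
  proof (rule W_ratio_eps[OF m00])
    show "\<mu>0 \<le> \<mu>" using mu by (simp add: \<mu>0_def)
    show "\<mu> \<le> \<mu>0 + lam s / real (r + E s + 2)" using mu by (simp add: \<mu>0_def mu0_Suc)
    have "k + n < 2 * bS s r" using n kL by simp
    also have "2 * bS s r \<le> 2^(E s + r + 2)" by (simp add: bS_def power_add)
    finally show "k + n \<le> 2^(E s + r + 2)" by simp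
    show "1 \<le> k + n" using n b1 by simp
  qed
  have zk: "z (k + n) = C * (yS s k / of_real (W \<mu>0 k n))"
    using zc cv by (simp add: C_def add.commute)
  have "(bws \<mu> ^^ n) z k - C * yS s k = C * yS s k * of_real (W \<mu> k n / W \<mu>0 k n - 1)"
    using W0 by (simp add: bws_iter zk field_simps)
  then have "norm ((bws \<mu> ^^ n) z k - C * yS s k) = norm C * norm (yS s k) * \<bar>W \<mu> k n / W \<mu>0 k n - 1\<bar>"
    by (simp only: norm_mult norm_of_real)
  also have "\<bar>W \<mu> k n / W \<mu>0 k n - 1\<bar> \<le> eps s"
    using Wl Wu W0 by (auto simp: field_simps abs_le_iff)
  then have "norm C * norm (yS s k) * \<bar>W \<mu> k n / W \<mu>0 k n - 1\<bar> \<le> norm C * YS s * eps s"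
    using YS_ge[of s k] eps_pos[of s] YS_ge1[of s] by (intro mult_mono) auto
  finally show ?thesis by (simp add: C_def)
qed

lemma far:
  assumes zc: "\<forall>m. z m = c (kap m) * u m" and r: "r < RR s"
    and mu: "mu0 s (E s) r \<le> \<mu>" "\<mu> \<le> mu0 s (E s) (Suc r)"
    and n: "n = bS s r + i * LS s" "n + LS s \<le> 2 * bS s r" and k: "JS s \<le> k" "k < n"
  shows "norm ((bws \<mu> ^^ n) z k - c (cls s) * yS s k) powr p \<le>
    norm (c (cls s)) powr p * (Kc s * (if LS s \<le> k then real (k+1) powr (-(1 + dl s)) else 0))"
proof -
  define C where "C = c (cls s)"
  define m where "m = k + n"
  have yk: "yS s k = 0" using yS_zero'[OF k(1)] .
  have val: "(bws \<mu> ^^ n) z k - C * yS s k = of_real (W \<mu> k n) * z m"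
    by (simp add: bws_iter yk m_def)
  have Kx0: "0 \<le> norm C powr p * (Kc s * (if LS s \<le> k then real (k+1) powr (-(1 + dl s)) else 0))"
    using Kc_pos[of s] by simp
  show ?thesis
  proof (cases "u m = 0")
    case True
    then have "z m = 0" using zc by simp
    then show ?thesis using val Kx0 p0 by (simp add: C_def)
  next
    case False
    then obtain s' r' where ir: "inreg s' r' m" using u_out by blast
    have b1: "bS s r \<ge> 1" by (rule bS_pos)
    have mb: "bS s r \<le> m" using n by (simp add: m_def)
    have m4: "m < 4 * bS s r" using n k by (simp add: m_def)
    from loc[OF ir r mb m4] have ss: "s' = s" and rr: "r' = r \<or> r' = Suc r" by auto
    have ir': "inreg s r' m" using ir ss by simp
    have um: "u m = blk s r' m" "kap m = cls s" using u_reg[OF ir'] by auto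
    have bnz: "blk s r' m \<noteq> 0" using False um by simp
    obtain i' k' where ik: "m = bS s r' + i' * LS s + k'" "k' < JS s" "bS s r' + i' * LS s + LS s \<le> 2 * bS s r'"
      "blk s r' m = yS s k' / of_real (W (mu0 s (E s) r') k' (bS s r' + i' * LS s))"
      using blk_nz[OF bnz ir'] by metis
    define n' where "n' = bS s r' + i' * LS s"
    define \<mu>0' where "\<mu>0' = mu0 s (E s) r'"
    have nn': "n' \<ge> n + LS s"
    proof (cases "r' = r")
      case True
      have "n' + k' = n + k" using ik(1) by (simp add: n'_def m_def)
      then have "i' * LS s + k' = i * LS s + k" using True n by (simp add: n'_def)
      moreover have "k' < k" using ik(2) k(1) by simp
      ultimately have "i * LS s < i' * LS s" by linarith
      then have "i < i'" by (simp add: mult_less_cancel2)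
      then have "(i + 1) * LS s \<le> i' * LS s" by (intro mult_right_mono) auto
      then show ?thesis using True n by (simp add: n'_def algebra_simps)
    next
      case False
      then have "r' = Suc r" using rr by simp
      then have "n' \<ge> 2 * bS s r" by (simp add: n'_def bS_Suc)
      then show ?thesis using n by simp
    qed
    have kk: "k \<ge> LS s + k'" using nn' ik(1) by (simp add: n'_def m_def)
    have kL: "LS s \<le> k" using kk by simp
    have m00': "0 \<le> \<mu>0'" "1 + dl s \<le> \<mu>0'" using mu0_ge[of s "E s" r'] dl_pos[of s] by (simp_all add: \<mu>0'_def)
    define P1 where "P1 = (\<Prod>i\<in>{Suc k'..k}. 1 + \<mu>0' / real i)"
    have Wsplit: "W \<mu>0' k' n' = P1 * W \<mu>0' k n"
    proof -
      have "k' + n' = k + n" using ik(1) by (simp add: n'_def m_def)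
      then have "W \<mu>0' k' n' = (\<Prod>i\<in>{Suc k'..k + n}. 1 + \<mu>0' / real i)" by (simp add: W_def)
      also have "\<dots> = P1 * W \<mu>0' k n" unfolding P1_def W_def
        by (rule prod_split_ivl) (use kk in auto)
      finally show ?thesis .
    qed
    have P1l: "(real (k+1) / real (k'+2)) powr (1 + dl s) \<le> P1"
      unfolding P1_def using prod_lower[of "dl s" "\<mu>0'" k' k] dl_pos[of s] dl_le[of s] m00' kk by simp
    have P1p: "P1 > 0" unfolding P1_def using m00' by (intro prod_pos) (auto intro: add_pos_nonneg)
    have W0p: "W \<mu>0' k n > 0" using W_pos[OF m00'(1)] by simp
    have Wr: "W \<mu> k n \<le> (1 + eps s) * W \<mu>0' k n"
    proof (cases "\<mu> \<le> \<mu>0'")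
      case True
      have "W \<mu> k n \<le> W \<mu>0' k n" using W_mono[of \<mu> \<mu>0'] True mu mu0_ge[of s "E s" r] dl_pos[of s] by simp
      moreover have "0 \<le> eps s * W \<mu>0' k n" using W0p eps_pos[of s] by simp
      ultimately show ?thesis by (simp add: algebra_simps)
    next
      case False
      then have rr': "r' = r" using rr mu by (auto simp: \<mu>0'_def)
      show ?thesis
      proof (rule W_ratio_eps)
        show "0 \<le> \<mu>0'" "\<mu>0' \<le> \<mu>" using m00' False by auto
        show "\<mu> \<le> \<mu>0' + lam s / real (r + E s + 2)" using mu rr' by (simp add: \<mu>0'_def mu0_Suc)
        have "k + n < 4 * bS s r" using m4 by (simp add: m_def)
        also have "4 * bS s r = 2^(E s + r + 2)" by (simp add: bS_def power_add)
        finally show "k + n \<le> 2^(E s + r + 2)" by simp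
        show "1 \<le> k + n" using n b1 by simp
      qed
    qed
    have zm: "z m = C * (yS s k' / of_real (W \<mu>0' k' n'))"
      using zc um ik(4) by (simp add: C_def \<mu>0'_def n'_def)
    have "norm ((bws \<mu> ^^ n) z k - C * yS s k) = W \<mu> k n * norm C * norm (yS s k') / (P1 * W \<mu>0' k n)"
      using W_pos[of \<mu> k n] mu mu0_ge[of s "E s" r] dl_pos[of s] Wsplit P1p W0p
      by (simp add: val zm norm_mult norm_divide mult.assoc)
    also have "\<dots> \<le> (1 + eps s) * W \<mu>0' k n * norm C * YS s / (P1 * W \<mu>0' k n)"
      using Wr YS_ge[of s k'] P1p W0p eps_pos[of s]
      by (intro divide_right_mono mult_mono) (auto intro!: mult_nonneg_nonneg)
    also have "\<dots> = (1 + eps s) * norm C * (YS s / P1)" using W0p P1p by (simp add: field_simps)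
    also have "\<dots> \<le> 2 * norm C * (YS s / (real (k+1) / real (k'+2)) powr (1 + dl s))"
      using eps_le1[of s] P1l P1p YS_ge1[of s]
      by (intro mult_mono divide_left_mono) (auto intro: mult_pos_pos)
    also have "\<dots> \<le> 2 * norm C * (YS s * (real (JS s) + 1)^2 * real (k+1) powr (-(1 + dl s)))"
      using decay_bound[OF ik(2), of k] kk by (intro mult_left_mono) auto
    also have "\<dots> = norm C * (2 * YS s * (real (JS s) + 1)^2) * real (k+1) powr (-(1 + dl s))"
      by (simp add: algebra_simps)
    finally have nb: "norm ((bws \<mu> ^^ n) z k - C * yS s k) \<le> norm C * (2 * YS s * (real (JS s) + 1)^2) * real (k+1) powr (-(1 + dl s))" .
    have A1: "1 \<le> 2 * YS s * (real (JS s) + 1)^2"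
    proof -
      have "1 \<le> (real (JS s) + 1)^2" by simp
      then show ?thesis using YS_ge1[of s] by (smt (verit) mult_le_cancel_right1 mult_mono)
    qed
    have "norm ((bws \<mu> ^^ n) z k - C * yS s k) powr p \<le> norm C powr p * ((2 * YS s * (real (JS s) + 1)^2) powr p * real (k+1) powr (-(1 + dl s)))"
      by (rule powr_final[OF nb _ _ A1 X_le1]) auto
    then show ?thesis using kL by (simp add: Kc_def C_def)
  qed
qed

end

context constr
begin

lemma est:
  assumes zl: "z \<in> lp p" and zc: "\<forall>m. z m = c (kap m) * u m" and r: "r < RR s"
    and mu: "mu0 s (E s) r \<le> \<mu>" "\<mu> \<le> mu0 s (E s) (Suc r)"
    and n: "n = bS s r + i * LS s" "n + LS s \<le> 2 * bS s r"
  shows "psum p (\<lambda>k. (bws \<mu> ^^ n) z k - c (cls s) * yS s k) \<le>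
    real (JS s) * (norm (c (cls s)) * YS s * eps s) powr p + norm (c (cls s)) powr p * eps s
    + (2 powr \<mu>) powr p * (\<Sum>i. norm (z (i + 2*n)) powr p)"
proof -
  define C where "C = c (cls s)"
  define F where "F k = (bws \<mu> ^^ n) z k - C * yS s k" for k
  define f where "f k = norm (F k) powr p" for k
  have mu0: "\<mu> \<ge> 0" using mu mu0_ge[of s "E s" r] dl_pos[of s] by simp
  have Tl: "(bws \<mu> ^^ n) z \<in> lp p" by (rule bws_lp[OF mu0 zl p0])
  have Cyl: "(\<lambda>k. C * yS s k) \<in> lp p" by (rule lp_finite_support[of "JS s"]) (use yS_zero' p0 in auto)
  have Fl: "F \<in> lp p" unfolding F_def using lp_diff[OF Tl Cyl] p0 by simp
  have sf: "summable f" unfolding f_def using lp_summable[OF Fl] .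
  have b8: "bS s r \<ge> 8 * LS s" by (rule bS_ge_L)
  have nJ: "JS s \<le> n" using b8 LS_ge[of s] n by simp
  have n1: "1 \<le> n" using bS_pos[of s r] n by simp
  have sz: "summable (\<lambda>i. norm (z (i + 2*n)) powr p)"
    using lp_summable[OF zl] summable_iff_shift[of "\<lambda>i. norm (z i) powr p" "2*n"] by simp
  have split: "psum p F = (\<Sum>i. f (i + n)) + (\<Sum>k<n. f k)"
    unfolding psum_def f_def[symmetric] by (rule suminf_split_initial_segment[OF sf])
  have T: "(\<Sum>i. f (i + n)) \<le> (2 powr \<mu>) powr p * (\<Sum>i. norm (z (i + 2*n)) powr p)"
  proof -
    have "f (i + n) \<le> (2 powr \<mu>) powr p * norm (z (i + 2*n)) powr p" for i
    proof -
      have yk: "yS s (i + n) = 0" using yS_zero'[of s "i + n"] nJ by simp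
      have Wb: "W \<mu> (i + n) n \<le> 2 powr \<mu>"
      proof -
        have "W \<mu> (i + n) n \<le> (real (i + n + n) / real (i + n)) powr \<mu>"
          unfolding W_def by (rule prod_upper[OF mu0]) (use n1 in auto)
        also have "\<dots> \<le> 2 powr \<mu>" using n1 mu0 by (intro powr_mono2) (auto simp: divide_le_eq)
        finally show ?thesis .
      qed
      have "f (i + n) = (W \<mu> (i + n) n * norm (z (i + 2*n))) powr p"
        using W_pos[OF mu0, of "i + n" n] yk
        by (simp add: f_def F_def bws_iter norm_mult mult_2 add.assoc)
      also have "\<dots> \<le> (2 powr \<mu> * norm (z (i + 2*n))) powr p"
        using Wb W_pos[OF mu0, of "i + n" n] p0 by (intro powr_mono2 mult_right_mono) auto
      also have "\<dots> = (2 powr \<mu>) powr p * norm (z (i + 2*n)) powr p" by (simp add: powr_mult)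
      finally show ?thesis .
    qed
    then have "(\<Sum>i. f (i + n)) \<le> (\<Sum>i. (2 powr \<mu>) powr p * norm (z (i + 2*n)) powr p)"
      using sf sz by (intro suminf_le summable_mult) (auto simp: summable_iff_shift[of f n])
    also have "\<dots> = (2 powr \<mu>) powr p * (\<Sum>i. norm (z (i + 2*n)) powr p)" by (rule suminf_mult[OF sz])
    finally show ?thesis .
  qed
  have H1: "(\<Sum>k<JS s. f k) \<le> real (JS s) * (norm C * YS s * eps s) powr p"
  proof -
    have "(\<Sum>k<JS s. f k) \<le> (\<Sum>k<JS s. (norm C * YS s * eps s) powr p)"
    proof (rule sum_mono)
      fix k assume "k \<in> {..<JS s}"
      then have "norm (F k) \<le> norm C * YS s * eps s" unfolding F_def C_def
        using near[OF zc r mu n] by simp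
      then show "f k \<le> (norm C * YS s * eps s) powr p" unfolding f_def using p0 by (intro powr_mono2) auto
    qed
    then show ?thesis by simp
  qed
  have H2: "(\<Sum>k\<in>{JS s..<n}. f k) \<le> norm C powr p * eps s"
  proof -
    define X where "X k = real (k+1) powr (-(1 + dl s))" for k
    have "(\<Sum>k\<in>{JS s..<n}. f k) \<le> (\<Sum>k\<in>{JS s..<n}. norm C powr p * (Kc s * (if LS s \<le> k then X k else 0)))"
    proof (rule sum_mono)
      fix k assume "k \<in> {JS s..<n}"
      then show "f k \<le> norm C powr p * (Kc s * (if LS s \<le> k then X k else 0))"
        unfolding f_def F_def C_def X_def using far[OF zc r mu n, of k] by simp
    qed
    also have "\<dots> = norm C powr p * Kc s * (\<Sum>k\<in>{JS s..<n}. if LS s \<le> k then X k else 0)"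
      by (simp add: sum_distrib_left mult.assoc)
    also have "(\<Sum>k\<in>{JS s..<n}. if LS s \<le> k then X k else 0) = (\<Sum>k\<in>{LS s..<n}. X k)"
    proof -
      have "(\<Sum>k\<in>{JS s..<n}. if LS s \<le> k then X k else 0) = sum X {k \<in> {JS s..<n}. LS s \<le> k}"
        by (rule sum.inter_filter[symmetric]) simp
      also have "{k \<in> {JS s..<n}. LS s \<le> k} = {LS s..<n}" using LS_ge[of s] by auto
      finally show ?thesis .
    qed
    also have "(\<Sum>k\<in>{LS s..<n}. X k) \<le> tailf (dl s) (LS s)"
      unfolding X_def by (rule partial_le_tailf[OF dl_pos])
    finally have "(\<Sum>k\<in>{JS s..<n}. f k) \<le> norm C powr p * Kc s * tailf (dl s) (LS s)"
      using Kc_pos[of s] by (simp add: mult_left_mono)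
    also have "\<dots> = norm C powr p * (Kc s * tailf (dl s) (LS s))" by simp
    also have "\<dots> \<le> norm C powr p * eps s" by (intro mult_left_mono LS_tail) auto
    finally show ?thesis .
  qed
  have "(\<Sum>k<n. f k) = (\<Sum>k<JS s. f k) + (\<Sum>k\<in>{JS s..<n}. f k)"
  proof -
    have "{..<n} = {..<JS s} \<union> {JS s..<n}" using nJ by auto
    moreover have "sum f ({..<JS s} \<union> {JS s..<n}) = sum f {..<JS s} + sum f {JS s..<n}"
      by (rule sum.union_disjoint) auto
    ultimately show ?thesis by simp
  qed
  then have "psum p F \<le> (2 powr \<mu>) powr p * (\<Sum>i. norm (z (i + 2*n)) powr p) +
      (real (JS s) * (norm C * YS s * eps s) powr p + norm C powr p * eps s)"
    using split T H1 H2 by linarith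
  moreover have "F = (\<lambda>k. (bws \<mu> ^^ n) z k - c (cls s) * yS s k)" by (simp add: fun_eq_iff F_def C_def)
  ultimately show ?thesis unfolding C_def by simp
qed

lemma supp_bound:
  assumes "u m \<noteq> 0" "m < 2^(E (Suc s))"
  shows "m < 2^(E s + RR s)"
proof -
  obtain s' r' where ir: "inreg s' r' m" using assms(1) u_out by blast
  have sw: "2^(E s') \<le> m" "m < 2^(E s' + RR s')" using inreg_sweep[OF ir] by auto
  consider "s < s'" | "s' = s" | "s' < s" by linarith
  then show ?thesis
  proof cases
    case 1
    then have "Suc s \<le> s'" by simp
    then have "E (Suc s) \<le> E s'" using E_mono[of "Suc s" s'] by auto
    then have "(2::nat)^(E (Suc s)) \<le> 2^(E s')" by (intro power_increasing) auto
    then show ?thesis using sw assms by linarith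
  next
    case 2 then show ?thesis using sw by simp
  next
    case 3
    then have "E s' + RR s' \<le> E s + RR s" using E_strict[of s' s] by simp
    then have "(2::nat)^(E s' + RR s') \<le> 2^(E s + RR s)" by (intro power_increasing) auto
    then show ?thesis using sw by linarith
  qed
qed

lemma not_FHC:
  assumes zM: "z \<in> MM" and mu: "\<mu> \<ge> 0"
  shows "\<not> freq_hypercyclic_lp p (bws \<mu>) z"
proof
  assume fh: "freq_hypercyclic_lp p (bws \<mu>) z"
  obtain c where zc: "\<forall>m. z m = c (kap m) * u m" and zl: "z \<in> lp p" using zM by (auto simp: MM_def)
  define U0 :: "(nat \<Rightarrow> 'a) set" where "U0 = {y \<in> lp p. norm (y 0 - 1) < 1/2}"
  have U0o: "lp_open p U0"
    unfolding lp_open_def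
  proof (intro conjI ballI)
    show "U0 \<subseteq> lp p" by (auto simp: U0_def)
    fix x assume x: "x \<in> U0"
    show "\<exists>e>0. \<forall>y\<in>lp p. lp_norm p (\<lambda>n. y n - x n) < e \<longrightarrow> y \<in> U0"
    proof (intro exI[of _ "1/2 - norm (x 0 - 1)"] conjI ballI impI)
      show "1/2 - norm (x 0 - 1) > 0" using x by (simp add: U0_def)
      fix y assume y: "y \<in> lp p" "lp_norm p (\<lambda>n. y n - x n) < 1/2 - norm (x 0 - 1)"
      have "norm (y 0 - x 0) < 1/2 - norm (x 0 - 1)"
        using coord_diff_le[OF y(1), of x 0] x y(2) by (simp add: U0_def)
      moreover have "norm (y 0 - 1) \<le> norm (y 0 - x 0) + norm (x 0 - 1)"
        using norm_triangle_ineq[of "y 0 - x 0" "x 0 - 1"] by simp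
      ultimately show "y \<in> U0" using y by (simp add: U0_def)
    qed
  qed
  have U0ne: "U0 \<noteq> {}"
  proof -
    have "((\<lambda>n. if n = 0 then 1 else 0) :: nat \<Rightarrow> 'a) \<in> lp p" by (rule lp_finite_support[of 1]) (use p0 in auto)
    then have "(\<lambda>n. if n = 0 then (1::'a) else 0) \<in> U0" by (simp add: U0_def)
    then show ?thesis by blast
  qed
  define A where "A = visits (bws \<mu>) z U0"
  have pos: "lower_density A > 0" using fh U0o U0ne unfolding freq_hypercyclic_lp_def A_def by blast
  have Asub: "n \<in> A \<Longrightarrow> u n \<noteq> 0" for n
  proof -
    assume "n \<in> A"
    then have "norm ((bws \<mu> ^^ n) z 0 - 1) < 1/2" by (simp add: A_def visits_def U0_def)
    then have "(bws \<mu> ^^ n) z 0 \<noteq> 0" by auto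
    then have "z n \<noteq> 0" by (simp add: bws_iter)
    then show "u n \<noteq> 0" using zc by auto
  qed
  have "\<not> lower_density A > 0"
  proof (rule lower_density_zero)
    fix \<epsilon> :: real and N0 :: nat assume e: "\<epsilon> > 0"
    obtain n0 where n0: "(1/2::real)^n0 < \<epsilon>" using real_arch_pow_inv[OF e, of "1/2"] by auto
    define s where "s = max N0 n0"
    define N where "N = 2^(E (Suc s)) - (1::nat)"
    have p2: "(2::nat)^(E (Suc s)) \<ge> 1" by simp
    have N1: "N + 1 = 2^(E (Suc s))" using p2 by (simp add: N_def)
    have "N0 \<le> s" by (simp add: s_def)
    also have "s < E (Suc s)" using E_ge[of "Suc s"] by simp
    also have "E (Suc s) < 2^(E (Suc s))" by (rule less_exp)
    finally have NN0: "N \<ge> N0" using N1 by linarith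
    have sub: "A \<inter> {0..N} \<subseteq> {..<2^(E s + RR s)}"
    proof
      fix n assume "n \<in> A \<inter> {0..N}"
      then have "u n \<noteq> 0" "n < 2^(E (Suc s))" using Asub N1 by auto
      then show "n \<in> {..<2^(E s + RR s)}" using supp_bound by auto
    qed
    have "card (A \<inter> {0..N}) \<le> 2^(E s + RR s)"
      using card_mono[OF _ sub] by simp
    then have c1: "real (card (A \<inter> {0..N})) \<le> 2^(E s + RR s)" by (simp flip: of_nat_power)
    have "(2::nat)^(E s + RR s) * 2^(s+2) \<le> 2^(E (Suc s))"
      unfolding power_add[symmetric] using E_Suc_ge[of s] by (intro power_increasing) auto
    then have "real ((2::nat)^(E s + RR s) * 2^(s+2)) \<le> real ((2::nat)^(E (Suc s)))" by (simp only: of_nat_le_iff)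
    then have c2: "(2::real)^(E s + RR s) * 2^(s+2) \<le> 2^(E (Suc s))" by (simp only: of_nat_mult of_nat_power of_nat_numeral)
    have "real (card (A \<inter> {0..N})) / real (N + 1) \<le> 2^(E s + RR s) / 2^(E (Suc s))"
    proof -
      have N1r: "real (N + 1) = (2::real)^(E (Suc s))" using N1 by (metis of_nat_numeral of_nat_power)
      show ?thesis using c1 unfolding N1r by (intro divide_right_mono) auto
    qed
    also have "\<dots> \<le> 1 / 2^(s+2)" using c2 by (simp add: field_simps)
    also have "\<dots> \<le> (1/2)^n0"
    proof -
      have "(1/2::real)^(s+2) \<le> (1/2)^n0" by (rule power_decreasing) (auto simp: s_def)
      then show ?thesis by (simp add: power_one_over)
    qed
    finally show "\<exists>N\<ge>N0. real (card (A \<inter> {0..N})) / real (N + 1) < \<epsilon>"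
      using n0 NN0 by (intro exI[of _ N]) auto
  qed
  then show False using pos by simp
qed

lemma LS_tuple: "pj s = pj s' \<Longrightarrow> tt s = tt s' \<Longrightarrow> qq s = qq s' \<Longrightarrow> LS s = LS s'"
  by (simp add: LS_def JS_def Kc_def YS_def yS_def dl_def eps_def)

lemma count_lemma:
  assumes "L \<ge> 1" "b \<ge> 8 * L"
  shows "1 / (6 * real L) \<le> real (b div L) / real (2 * b + 1)"
proof -
  have "b = b div L * L + b mod L" by simp
  moreover have "b mod L < L" using assms by simp
  ultimately have "b div L * L + L > b" by linarith
  then have "real b < real (b div L * L + L)" by (simp only: of_nat_less_iff)
  then have h0: "real (b div L) * real L + real L > real b" by simp
  have "real b \<ge> 8 * real L" using assms(2) by (metis of_nat_le_iff of_nat_mult of_nat_numeral)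
  then have h: "real (b div L) * real L \<ge> real b / 2" using h0 by linarith
  have L0: "real L > 0" using assms by simp
  have b0: "real b > 0" using assms by simp
  have "1 / (6 * real L) = (real b / 2) / (real L * (3 * real b))" using b0 L0 by (simp add: field_simps)
  also have "\<dots> \<le> (real (b div L) * real L) / (real L * (3 * real b))"
    using h L0 b0 by (intro divide_right_mono) auto
  also have "\<dots> = real (b div L) / (3 * real b)" using L0 by simp
  also have "\<dots> \<le> real (b div L) / real (2 * b + 1)"
    using b0 assms by (intro divide_left_mono) auto
  finally show ?thesis .
qed

lemma region_choice:
  assumes "1 + dl s \<le> \<mu>" "\<mu> \<le> real (qq s)"
  shows "\<exists>r<RR s. mu0 s (E s) r \<le> \<mu> \<and> \<mu> \<le> mu0 s (E s) (Suc r)"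
proof -
  define P where "P r \<longleftrightarrow> \<mu> \<le> mu0 s (E s) (Suc r)" for r
  define r0 where "r0 = RR s - 1"
  have R1: "RR s \<ge> 1" by (rule Rs_ge1)
  have "P r0" unfolding P_def r0_def using Rs_prop[of s "E s"] assms R1 by simp
  define r where "r = (LEAST r. P r)"
  have Pr: "P r" unfolding r_def by (rule LeastI[of P r0]) fact
  have rr: "r \<le> r0" unfolding r_def by (rule Least_le) fact
  have lo: "mu0 s (E s) r \<le> \<mu>"
  proof (cases r)
    case 0 then show ?thesis using assms by (simp add: mu0_0)
  next
    case (Suc r')
    then have "\<not> P r'" unfolding r_def using not_less_Least[of r' P] Suc r_def by simp
    then show ?thesis using Suc by (simp add: P_def)
  qed
  show ?thesis using Pr lo rr R1 by (intro exI[of _ r]) (auto simp: P_def r0_def)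
qed

lemma UFHC:
  assumes zM: "z \<in> MM" and nz: "z \<noteq> (\<lambda>n. 0)" and mu: "\<mu> > 1"
  shows "U_freq_hypercyclic_lp p (bws \<mu>) z"
  unfolding U_freq_hypercyclic_lp_def
proof (intro conjI allI impI)
  obtain c where zc: "\<forall>m. z m = c (kap m) * u m" and zl: "z \<in> lp p" using zM by (auto simp: MM_def)
  show "z \<in> lp p" by (rule zl)
  fix U :: "(nat \<Rightarrow> 'a) set" assume U: "lp_open p U \<and> U \<noteq> {}"
  then obtain x0 where x0: "x0 \<in> U" by blast
  have x0l: "x0 \<in> lp p" using U x0 by (auto simp: lp_open_def)
  obtain e where e: "e > 0" and eU: "\<And>y. y \<in> lp p \<Longrightarrow> psum p (\<lambda>n. y n - x0 n) < e \<Longrightarrow> y \<in> U"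
    using lp_open_ball[of p U x0] U x0 p0 by blast
  have "\<exists>m. z m \<noteq> 0"
  proof (rule ccontr)
    assume "\<not> ?thesis"
    then have "z = (\<lambda>n. 0)" by auto
    then show False using nz by simp
  qed
  then obtain m0 where m0: "z m0 \<noteq> 0" by blast
  define k0 where "k0 = kap m0"
  define C where "C = c k0"
  have C0: "C \<noteq> 0" using m0 zc by (auto simp: C_def k0_def)
  define e3 where "e3 = e / (3 * 2 powr p)"
  have e3: "e3 > 0" using e by (simp add: e3_def)
  define x1 where "x1 = (\<lambda>k. inverse C * x0 k)"
  have x1l: "x1 \<in> lp p" unfolding x1_def by (rule lp_scale(1)[OF x0l])
  have nC: "norm C powr p > 0" using C0 by simp
  obtain y where yP: "y \<in> pats D" and yd: "psum p (\<lambda>k. y k - x1 k) < e3 / norm C powr p"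
    using pats_dense[OF D0 Dd x1l p0, of "e3 / norm C powr p"] e3 nC by auto
  have yl: "y \<in> lp p" by (rule lp_finite_support[of "PJ y"]) (use PJ_zero[OF yP] p0 in auto)
  have dl1: "(\<lambda>k. y k - x1 k) \<in> lp p" using lp_diff[OF yl x1l] p0 by simp
  have eqCy: "(\<lambda>k. C * y k - x0 k) = (\<lambda>k. C * (y k - x1 k))"
    using C0 by (auto simp: x1_def fun_eq_iff algebra_simps)
  have Cyx: "psum p (\<lambda>k. C * y k - x0 k) < e3"
  proof -
    have "psum p (\<lambda>k. C * y k - x0 k) = norm C powr p * psum p (\<lambda>k. y k - x1 k)"
      unfolding eqCy by (rule lp_scale(2)[OF dl1])
    also have "\<dots> < norm C powr p * (e3 / norm C powr p)" using yd nC by (intro mult_strict_left_mono) auto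
    also have "\<dots> = e3" using nC by simp
    finally show ?thesis .
  qed
  have Cyl: "(\<lambda>k. C * y k - x0 k) \<in> lp p" unfolding eqCy by (rule lp_scale(1)[OF dl1])
  obtain j where j: "pat j = y" using pat_surj[OF yP] by blast
  define q where "q = nat \<lceil>max \<mu> (1 / (\<mu> - 1))\<rceil>"
  have qge: "max \<mu> (1 / (\<mu> - 1)) \<le> real q" unfolding q_def by (rule real_nat_ceiling_ge)
  have q1: "\<mu> \<le> real (q + 2)" using qge by simp
  have q2: "1 / real (q + 2) \<le> \<mu> - 1"
  proof -
    have "1 / (\<mu> - 1) \<le> real (q + 2)" using qge by simp
    then have "1 / real (q + 2) \<le> 1 / (1 / (\<mu> - 1))" using mu by (intro divide_left_mono) auto
    then show ?thesis using mu by simp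
  qed
  define B where "B = real (PJ y + 1) * (norm C * PY y) powr p + norm C powr p + 1"
  have B0: "B > 0" unfolding B_def by (simp add: add_nonneg_pos)
  obtain t where t: "inverse (real (Suc t)) < e3 / B" using reals_Archimedean[of "e3/B"] e3 B0 by auto
  have small: "real (JS s) * (norm C * YS s * eps s) powr p + norm C powr p * eps s < e3"
    if st: "pj s = j" "tt s = t + 1" for s
  proof -
    have Js: "JS s = PJ y + 1" "YS s = PY y" using st j by (simp_all add: JS_def YS_def yS_def)
    have es: "eps s = inverse (real (Suc t))" using st by (simp add: eps_def inverse_eq_divide)
    have e01: "0 < eps s" "eps s \<le> 1" by (rule eps_pos, rule eps_le1)
    have "(norm C * YS s * eps s) powr p = (norm C * YS s) powr p * eps s powr p"
      using YS_ge1[of s] e01 by (simp add: powr_mult)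
    also have "\<dots> \<le> (norm C * YS s) powr p * eps s" by (intro mult_left_mono powr_le_self) (use e01 in auto)
    finally have a: "real (JS s) * (norm C * YS s * eps s) powr p \<le> real (JS s) * ((norm C * YS s) powr p * eps s)"
      by (intro mult_left_mono) auto
    have "real (JS s) * (norm C * YS s * eps s) powr p + norm C powr p * eps s
        \<le> (real (JS s) * (norm C * YS s) powr p + norm C powr p) * eps s"
      using a by (simp add: algebra_simps)
    also have "\<dots> \<le> B * eps s" unfolding B_def Js by (intro mult_right_mono) (use e01 in auto)
    also have "\<dots> < B * (e3 / B)" using t es B0 by (intro mult_strict_left_mono) auto
    also have "\<dots> = e3" using B0 by simp
    finally show ?thesis .
  qed
  have sz: "summable (\<lambda>i. norm (z i) powr p)" by (rule lp_summable[OF zl])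
  define e4 where "e4 = e3 / (2 powr \<mu>) powr p"
  have e4: "e4 > 0" using e3 by (simp add: e4_def)
  obtain N1 where N1: "\<forall>n\<ge>N1. norm (\<Sum>i. norm (z (i + n)) powr p) < e4"
    using suminf_exist_split[OF e4 sz] by blast
  obtain s0 where s0: "cls s0 = k0" "pj s0 = j" "tt s0 = t + 1" "qq s0 = q + 2"
    using tuple_often[of 0 k0 j t q] by blast
  define L0 where "L0 = LS s0"
  have L01: "L0 \<ge> 1" using LS_ge1[of s0] by (simp add: L0_def)
  show "upper_density (visits (bws \<mu>) z U) > 0"
  proof (rule upper_density_pos[of "1 / (6 * real L0)"])
    show "1 / (6 * real L0) > 0" using L01 by simp
    fix N0
    obtain s where s: "s \<ge> max N0 N1" "cls s = k0" "pj s = j" "tt s = t + 1" "qq s = q + 2"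
      using tuple_often[of "max N0 N1" k0 j t q] by blast
    have Ls: "LS s = L0" unfolding L0_def by (rule LS_tuple) (use s s0 in auto)
    have mus: "1 + dl s \<le> \<mu>" "\<mu> \<le> real (qq s)" using q1 q2 s by (auto simp: dl_def)
    obtain r where r: "r < RR s" "mu0 s (E s) r \<le> \<mu>" "\<mu> \<le> mu0 s (E s) (Suc r)"
      using region_choice[OF mus] by blast
    define b where "b = bS s r"
    have b8: "b \<ge> 8 * L0" using bS_ge_L[of s r] Ls by (simp add: b_def)
    have bs: "b \<ge> s"
    proof -
      have "s \<le> E s + r" using E_ge[of s] by simp
      also have "E s + r < 2^(E s + r)" by (rule less_exp)
      finally show ?thesis by (simp add: b_def bS_def)
    qed
    have mu0': "\<mu> \<ge> 0" using mu by simp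
    have Cc: "c (cls s) = C" using s by (simp add: C_def)
    have ys: "yS s = y" using s j by (simp add: yS_def)
    have visit: "b + i * L0 \<in> visits (bws \<mu>) z U" if i: "i < b div L0" for i
    proof -
      define n where "n = b + i * L0"
      have "(i + 1) * L0 \<le> b div L0 * L0" using i by (intro mult_right_mono) auto
      also have "\<dots> \<le> b" by simp
      finally have nL: "n + LS s \<le> 2 * bS s r" by (simp add: n_def b_def Ls algebra_simps)
      have nn: "n = bS s r + i * LS s" by (simp add: n_def b_def Ls)
      have E1: "psum p (\<lambda>k. (bws \<mu> ^^ n) z k - C * y k) \<le>
          real (JS s) * (norm C * YS s * eps s) powr p + norm C powr p * eps s
          + (2 powr \<mu>) powr p * (\<Sum>i. norm (z (i + 2*n)) powr p)"
        using est[OF zl zc r(1) r(2) r(3) nn nL] unfolding Cc ys .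
      have "2 * n \<ge> N1" using bs s(1) by (simp add: n_def)
      then have "norm (\<Sum>i. norm (z (i + 2*n)) powr p) < e4" using N1 by blast
      then have "(\<Sum>i. norm (z (i + 2*n)) powr p) < e4" by simp
      then have "(2 powr \<mu>) powr p * (\<Sum>i. norm (z (i + 2*n)) powr p) < (2 powr \<mu>) powr p * e4"
        by (intro mult_strict_left_mono) auto
      also have "\<dots> = e3" by (simp add: e4_def)
      finally have tl: "(2 powr \<mu>) powr p * (\<Sum>i. norm (z (i + 2*n)) powr p) < e3" .
      have ps1: "psum p (\<lambda>k. (bws \<mu> ^^ n) z k - C * y k) < 2 * e3"
        using E1 tl small[OF s(3) s(4)] by linarith
      have Tl: "(bws \<mu> ^^ n) z \<in> lp p" by (rule bws_lp[OF mu0' zl p0])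
      have al: "(\<lambda>k. (bws \<mu> ^^ n) z k - C * y k) \<in> lp p"
        using lp_diff[OF Tl lp_scale(1)[OF yl, of C]] p0 by simp
      have "psum p (\<lambda>k. (bws \<mu> ^^ n) z k - x0 k) =
          psum p (\<lambda>k. ((bws \<mu> ^^ n) z k - C * y k) + (C * y k - x0 k))" by simp
      also have "\<dots> \<le> 2 powr p * (psum p (\<lambda>k. (bws \<mu> ^^ n) z k - C * y k) + psum p (\<lambda>k. C * y k - x0 k))"
        by (rule psum_add_le[OF al Cyl]) (use p0 in simp)
      also have "\<dots> < 2 powr p * (3 * e3)" using ps1 Cyx by (intro mult_strict_left_mono) auto
      also have "\<dots> = e" by (simp add: e3_def)
      finally have "(bws \<mu> ^^ n) z \<in> U" using eU[OF Tl] by blast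
      then show ?thesis by (simp add: visits_def n_def)
    qed
    define N where "N = 2 * b"
    have sub: "(\<lambda>i. b + i * L0) ` {..< b div L0} \<subseteq> visits (bws \<mu>) z U \<inter> {0..N}"
    proof
      fix x assume "x \<in> (\<lambda>i. b + i * L0) ` {..< b div L0}"
      then obtain i where i: "i < b div L0" "x = b + i * L0" by blast
      have "i * L0 \<le> b div L0 * L0" using i by (intro mult_right_mono) auto
      also have "\<dots> \<le> b" by simp
      finally have "x \<le> N" using i by (simp add: N_def)
      then show "x \<in> visits (bws \<mu>) z U \<inter> {0..N}" using visit[OF i(1)] i by simp
    qed
    have inj: "inj_on (\<lambda>i. b + i * L0) {..< b div L0}" using L01 by (auto simp: inj_on_def)
    have "b div L0 = card ((\<lambda>i. b + i * L0) ` {..< b div L0})" using card_image[OF inj] by simp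
    also have "\<dots> \<le> card (visits (bws \<mu>) z U \<inter> {0..N})" by (rule card_mono[OF _ sub]) simp
    finally have cge: "real (b div L0) \<le> real (card (visits (bws \<mu>) z U \<inter> {0..N}))" by simp
    have "1 / (6 * real L0) \<le> real (b div L0) / real (2 * b + 1)" by (rule count_lemma[OF L01 b8])
    also have "\<dots> \<le> real (card (visits (bws \<mu>) z U \<inter> {0..N})) / real (N + 1)"
      using cge by (simp add: N_def divide_right_mono)
    finally show "\<exists>N\<ge>N0. 1 / (6 * real L0) \<le> real (card (visits (bws \<mu>) z U \<inter> {0..N})) / real (N + 1)"
      using bs s(1) by (intro exI[of _ N]) (auto simp: N_def)
  qed
qed

end

theorem theorem1p3:
  fixes p :: real
  assumes "1 \<le> p"
  shows "\<exists>M :: (nat \<Rightarrow> 'a::{real_normed_field, banach}) set.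
     M \<subseteq> lp p \<and> seq_subspace M \<and> lp_closed p M \<and> infinite_dim M \<and>
     (\<forall>x\<in>M. x \<noteq> (\<lambda>n. 0) \<longrightarrow> (\<forall>\<mu>::real. \<mu> > 1 \<longrightarrow> U_freq_hypercyclic_lp p (bws \<mu>) x)) \<and>
     (\<forall>x\<in>M. \<forall>\<mu>::real. \<mu> > 1 \<longrightarrow> \<not> freq_hypercyclic_lp p (bws \<mu>) x)"
proof -
  obtain D :: "'a set" where D: "countable D" "1 \<in> D" "0 \<in> D"
    "\<forall>a e. e > 0 \<longrightarrow> (\<exists>d\<in>D. norm (a - d) < e)"
    using sep_field by blast
  interpret constr p D by unfold_locales (use assms D in auto)
  have "MM \<subseteq> lp p \<and> seq_subspace MM \<and> lp_closed p MM \<and> infinite_dim MM \<and>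
     (\<forall>x\<in>MM. x \<noteq> (\<lambda>n. 0) \<longrightarrow> (\<forall>\<mu>::real. \<mu> > 1 \<longrightarrow> U_freq_hypercyclic_lp p (bws \<mu>) x)) \<and>
     (\<forall>x\<in>MM. \<forall>\<mu>::real. \<mu> > 1 \<longrightarrow> \<not> freq_hypercyclic_lp p (bws \<mu>) x)"
    using MM_sub MM_subspace MM_closed MM_infdim UFHC not_FHC by auto
  then show ?thesis by blast
qed

end
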